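(* Let $Y\in\mathbb{R}$, $Z=(Z^{(1)},\dots,Z^{(p)})\in\mathbb{R}^p$, $X=(X^{(1)},\dots,X^{(d)})\in\mathbb{R}^d$ and $W\in\mathbb{R}^d$ be random variables/vectors with finite second moments, and write $$\mathrm{Cov}\begin{pmatrix} Z\\ X\\ W\end{pmatrix}=\begin{bmatrix} A & B & C\\ B^{\mathsf T} & D & F\\ C^{\mathsf T} & F^{\mathsf T} & G\end{bmatrix},\quad A\in\mathbb{R}^{p\times p},\ B,C\in\mathbb{R}^{p\times d},\ D,F,G\in\mathbb{R}^{d\times d}.$$ Let $(\alpha,\beta_Z,\beta_X)=\arg\min_{a\in\mathbb{R},b_Z\in\mathbb{R}^p,b_X\in\mathbb{R}^d}\mathbb{E}\big[\tfrac12(Y-a-Z^{\mathsf T}b_Z-X^{\mathsf T}b_X)^2\big]$ be the population regression coefficients. Let $(Y_i,Z_i,X_i,W_i)_{i=1}^N$ be samples satisfying: (i) the samples are identically distributed with the law of $(Y,Z,X,W)$, and the sample first and second moments (all entries of the sample analogues of $\mathbb{E}[V]$ and $\mathbb{E}[VV^{\mathsf T}]$, $V=(Y,Z,X,W)$) converge in probability to the corresponding population moments as $N\to\infty$; (ii) with $\varepsilon_i=Y_i-\alpha-Z_i^{\mathsf T}\beta_Z-X_i^{\mathsf T}\beta_X$, $\varepsilon_i$ is uncorrelated with $W_i-X_i$; (iii) the covariance matrices of $(Z,W)$ and of $(Z,X)$ are positive definite. Let $\hat\beta_Z^{(\mathrm{OM})}$ be the OLS coefficient vector for $Z$ in the regression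 of $Y_i$ on an intercept and $Z_i$ (omitting $X$), and define $\mathrm{bias}^{(\mathrm{OM})}_{\beta_Z}=\operatorname{plim}_{N\to\infty}\big(\hat\beta_Z^{(\mathrm{OM})}-\beta_Z\big)$. Suppose that all entries of $X$ are pollutant concentrations and that a subset $P\subseteq\{1,\dots,p\}$ of the entries of $Z$ are pollutant concentrations. Assume: (No Benefit) $\beta_{X,j}\le 0$ for all $j\in\{1,\dots,d\}$ and $\beta_{Z,l}\le 0$ for all $l\in P$; (Weak Partial $\mathrm{PC}_+$) for each $l\in P$ and each $j\in\{1,\dots,d\}$, the partial correlation of $Z^{(l)}$ and $X^{(j)}$ conditional on $(Z^{(m)})_{m\ne l}$ is positive. Then for every $k\in P$, $\big[\mathrm{bias}^{(\mathrm{OM})}_{\beta_Z}\big]_k\le 0$.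
   Context: Partial correlation of two entries $U,V$ of a random vector given a set of other entries is the correlation between the population linear-regression residuals of $U$ and of $V$ on those other entries (equivalently, computed from the inverse covariance matrix). "plim" denotes limit in probability. *)

theory Defs
  imports "HOL-Probability.Probability"
begin

definition cov :: "'a measure \<Rightarrow> ('a \<Rightarrow> real) \<Rightarrow> ('a \<Rightarrow> real) \<Rightarrow> real" where
  "cov M f g = integral\<^sup>L M (\<lambda>\<omega>. f \<omega> * g \<omega>) - integral\<^sup>L M f * integral\<^sup>L M g"

definition corr :: "'a measure \<Rightarrow> ('a \<Rightarrow> real) \<Rightarrow> ('a \<Rightarrow> real) \<Rightarrow> real" where
  "corr M f g = cov M f g / (sqrt (cov M f f) * sqrt (cov M g g))"

definition covmat :: "'a measure \<Rightarrow> ('a \<Rightarrow> real^'n) \<Rightarrow> real^'n^'n" where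
  "covmat M U = (\<chi> i j. cov M (\<lambda>\<omega>. U \<omega> $ i) (\<lambda>\<omega>. U \<omega> $ j))"

definition pos_def_mat :: "real^'n^'n \<Rightarrow> bool" where
  "pos_def_mat S \<longleftrightarrow> (\<forall>x. x \<noteq> 0 \<longrightarrow> x \<bullet> (S *v x) > 0)"

definition vstack :: "real^'m \<Rightarrow> real^'n \<Rightarrow> real^('m + 'n)" where
  "vstack u v = (\<chi> k. case k of Inl i \<Rightarrow> u $ i | Inr j \<Rightarrow> v $ j)"

definition is_lin_resid ::
  "'a measure \<Rightarrow> ('a \<Rightarrow> real) \<Rightarrow> ('i \<Rightarrow> 'a \<Rightarrow> real) \<Rightarrow> 'i set \<Rightarrow> ('a \<Rightarrow> real) \<Rightarrow> bool" where
  "is_lin_resid M U Zs S R \<longleftrightarrow>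
     (\<exists>c b. R = (\<lambda>\<omega>. U \<omega> - c - (\<Sum>m\<in>S. b m * Zs m \<omega>)) \<and>
        (\<forall>c' b'. integral\<^sup>L M (\<lambda>\<omega>. (U \<omega> - c - (\<Sum>m\<in>S. b m * Zs m \<omega>))^2)
                \<le> integral\<^sup>L M (\<lambda>\<omega>. (U \<omega> - c' - (\<Sum>m\<in>S. b' m * Zs m \<omega>))^2)))"

definition partial_corr ::
  "'a measure \<Rightarrow> ('a \<Rightarrow> real) \<Rightarrow> ('a \<Rightarrow> real) \<Rightarrow> ('i \<Rightarrow> 'a \<Rightarrow> real) \<Rightarrow> 'i set \<Rightarrow> real" where
  "partial_corr M U V Zs S =
     corr M (SOME R. is_lin_resid M U Zs S R) (SOME R. is_lin_resid M V Zs S R)"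

text \<open>Convergence in probability (inner-probability form; it agrees with the usual
  notion for measurable sequences, and does not silently succeed on non-measurable
  events).\<close>
definition conv_in_prob :: "'a measure \<Rightarrow> (nat \<Rightarrow> 'a \<Rightarrow> 'b::metric_space) \<Rightarrow> 'b \<Rightarrow> bool" where
  "conv_in_prob M S c \<longleftrightarrow>
     (\<forall>e>0. \<forall>\<delta>>0. \<exists>N0. \<forall>N\<ge>N0. \<exists>A\<in>sets M. measure M A \<ge> 1 - \<delta> \<and>
        (\<forall>\<omega>\<in>A. dist (S N \<omega>) c \<le> e))"

definition ols_slope :: "nat \<Rightarrow> (nat \<Rightarrow> real) \<Rightarrow> (nat \<Rightarrow> real^'p) \<Rightarrow> real^'p" where
  "ols_slope N y z = snd (SOME (a, b). \<forall>a' b'.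
      (\<Sum>i<N. (y i - a - z i \<bullet> b)^2) \<le> (\<Sum>i<N. (y i - a' - z i \<bullet> b')^2))"

definition stackV :: "real \<Rightarrow> real^'p \<Rightarrow> real^'d \<Rightarrow> real^'d \<Rightarrow> real^(1 + ('p + ('d + 'd)))" where
  "stackV y z x w = vstack (\<chi> _. y) (vstack z (vstack x w))"

end

theory Submission
  imports Defs
begin


definition sqi :: "'a measure \<Rightarrow> ('a \<Rightarrow> real) \<Rightarrow> bool" where
  "sqi M f \<longleftrightarrow> f \<in> borel_measurable M \<and> integrable M (\<lambda>x. (f x)^2)"

lemma abs_mult_le_sq: "\<bar>(a::real) * b\<bar> \<le> a^2 + b^2"
proof -
  have "(\<bar>a\<bar> - \<bar>b\<bar>)^2 = a^2 + b^2 - 2*\<bar>a*b\<bar>" by (simp add: power2_diff abs_mult)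
  moreover have "0 \<le> (\<bar>a\<bar> - \<bar>b\<bar>)^2" by simp
  moreover have "0 \<le> \<bar>a*b\<bar>" by simp
  ultimately show ?thesis by linarith
qed

context prob_space
begin

lemma sqi_meas: "sqi M f \<Longrightarrow> f \<in> borel_measurable M" by (simp add: sqi_def)

lemma sqi_int: "sqi M f \<Longrightarrow> integrable M f"
  unfolding sqi_def by (auto intro: square_integrable_imp_integrable)

lemma sqi_mult: assumes "sqi M f" "sqi M g" shows "integrable M (\<lambda>x. f x * g x)"
proof (rule Bochner_Integration.integrable_bound)
  show "integrable M (\<lambda>x. (f x)^2 + (g x)^2)" using assms unfolding sqi_def by auto
  show "(\<lambda>x. f x * g x) \<in> borel_measurable M" using assms unfolding sqi_def by auto
  show "AE x in M. norm (f x * g x) \<le> norm ((f x)^2 + (g x)^2)"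
    using abs_mult_le_sq by auto
qed

lemma sqi_const[simp]: "sqi M (\<lambda>x. c)"
  unfolding sqi_def by auto

lemma sqi_add: assumes "sqi M f" "sqi M g" shows "sqi M (\<lambda>x. f x + g x)"
proof -
  have "integrable M (\<lambda>x. (f x)^2 + (g x)^2 + 2 * f x * g x)"
    using assms sqi_mult[OF assms] unfolding sqi_def by (auto simp: mult.assoc)
  then show ?thesis using assms unfolding sqi_def by (auto simp: power2_sum)
qed

lemma sqi_cmult: assumes "sqi M f" shows "sqi M (\<lambda>x. c * f x)"
  using assms unfolding sqi_def by (auto simp: power_mult_distrib)

lemma sqi_diff: assumes "sqi M f" "sqi M g" shows "sqi M (\<lambda>x. f x - g x)"
  using sqi_add[OF assms(1) sqi_cmult[OF assms(2), of "-1"]] by simp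

lemma sqi_sum: "finite S \<Longrightarrow> (\<And>m. m \<in> S \<Longrightarrow> sqi M (f m)) \<Longrightarrow> sqi M (\<lambda>x. \<Sum>m\<in>S. f m x)"
proof (induction S rule: finite_induct)
  case empty then show ?case by simp
next
  case (insert a S) then show ?case by (simp add: sqi_add)
qed

lemma cov_sym: "cov M f g = cov M g f"
  unfolding cov_def by (simp add: mult.commute)

lemma cov_add_left: assumes "sqi M f" "sqi M g" "sqi M h"
  shows "cov M (\<lambda>x. f x + g x) h = cov M f h + cov M g h"
proof -
  have "integral\<^sup>L M (\<lambda>x. (f x + g x) * h x) = integral\<^sup>L M (\<lambda>x. f x * h x) + integral\<^sup>L M (\<lambda>x. g x * h x)"
    using sqi_mult[OF assms(1,3)] sqi_mult[OF assms(2,3)] by (simp add: distrib_right)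
  moreover have "integral\<^sup>L M (\<lambda>x. f x + g x) = integral\<^sup>L M f + integral\<^sup>L M g"
    using sqi_int assms by simp
  ultimately show ?thesis unfolding cov_def by (simp add: algebra_simps)
qed

lemma cov_cmult_left: "cov M (\<lambda>x. c * f x) h = c * cov M f h"
  unfolding cov_def by (simp add: algebra_simps)

lemma cov_const_left[simp]: "cov M (\<lambda>x. c) h = 0"
  unfolding cov_def by (simp add: prob_space)

lemma cov_diff_left: assumes "sqi M f" "sqi M g" "sqi M h"
  shows "cov M (\<lambda>x. f x - g x) h = cov M f h - cov M g h"
  using cov_add_left[OF assms(1) sqi_cmult[OF assms(2), of "-1"] assms(3)] cov_cmult_left[of "-1" g h]
  by simp

lemma cov_sum_left: "finite S \<Longrightarrow> (\<And>m. m \<in> S \<Longrightarrow> sqi M (f m)) \<Longrightarrow> sqi M h \<Longrightarrow>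
   cov M (\<lambda>x. \<Sum>m\<in>S. f m x) h = (\<Sum>m\<in>S. cov M (f m) h)"
proof (induction S rule: finite_induct)
  case empty then show ?case by (simp del: cov_const_left) (simp add: cov_def prob_space)
next
  case (insert a S) then show ?case by (simp add: cov_add_left sqi_sum)
qed

lemma cov_right_lin:
  "cov M h (\<lambda>x. f x + g x) = cov M h f + cov M h g" if "sqi M f" "sqi M g" "sqi M h"
  using cov_add_left[OF that] cov_sym by metis

lemma variational:
  assumes f: "sqi M f" and h: "sqi M h"
    and min: "\<And>t. integral\<^sup>L M (\<lambda>x. (f x)^2) \<le> integral\<^sup>L M (\<lambda>x. (f x - t * h x)^2)"
  shows "integral\<^sup>L M (\<lambda>x. f x * h x) = 0"
proof -
  define a where "a = integral\<^sup>L M (\<lambda>x. f x * h x)"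
  define b where "b = integral\<^sup>L M (\<lambda>x. (h x)^2)"
  have b0: "b \<ge> 0" unfolding b_def by simp
  have exp: "integral\<^sup>L M (\<lambda>x. (f x - t * h x)^2) = integral\<^sup>L M (\<lambda>x. (f x)^2) - 2 * t * a + t^2 * b" for t
  proof -
    have "(\<lambda>x. (f x - t * h x)^2) = (\<lambda>x. (f x)^2 - (2 * t) * (f x * h x) + t^2 * (h x)^2)"
      by (auto simp: power2_eq_square algebra_simps)
    moreover have "integrable M (\<lambda>x. (f x)^2)" "integrable M (\<lambda>x. (h x)^2)"
      using f h unfolding sqi_def by auto
    ultimately show ?thesis using sqi_mult[OF f h] unfolding a_def b_def by simp
  qed
  define t where "t = a / (b + 1)"
  have "0 \<le> - 2 * t * a + t^2 * b" using min[of t] exp[of t] by simp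
  then have "0 \<le> (- 2 * t * a + t^2 * b) * (b+1)^2" using b0 by simp
  also have "\<dots> = -2*a*(t*(b+1))*(b+1) + (t*(b+1))^2*b"
    by (simp add: power2_eq_square algebra_simps)
  also have ts: "t*(b+1) = a" unfolding t_def using b0 by simp
  have "-2*a*(t*(b+1))*(b+1) + (t*(b+1))^2*b = -(a^2 * (b + 2))"
    unfolding ts by (simp add: power2_eq_square algebra_simps)
  finally have "a^2 * (b+2) \<le> 0" by simp
  moreover have "a^2 * (b+2) \<ge> 0" using b0 by simp
  ultimately have "a^2 * (b+2) = 0" by linarith
  then show ?thesis using b0 unfolding a_def by simp
qed

end


lemma pd_solve:
  fixes S :: "'n::finite \<Rightarrow> 'n \<Rightarrow> real" and c :: "real^'n"
  assumes pd: "\<And>v::real^'n. v \<noteq> 0 \<Longrightarrow> (\<Sum>k\<in>UNIV. \<Sum>l\<in>UNIV. S k l * v$k * v$l) > 0"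
  shows "\<exists>b::real^'n. \<forall>k. (\<Sum>l\<in>UNIV. S k l * b$l) = c$k"
proof -
  define A :: "real^'n^'n" where "A = (\<chi> k l. S k l)"
  have "x = 0" if "A *v x = 0" for x
  proof (rule ccontr)
    assume "x \<noteq> 0"
    then have "(\<Sum>k\<in>UNIV. \<Sum>l\<in>UNIV. S k l * x$k * x$l) > 0" by (rule pd)
    moreover have "(\<Sum>k\<in>UNIV. \<Sum>l\<in>UNIV. S k l * x$k * x$l) = (\<Sum>k\<in>UNIV. x$k * (A *v x)$k)"
      unfolding A_def matrix_vector_mult_def by (simp add: sum_distrib_left algebra_simps)
    ultimately show False using that by simp
  qed
  then have "surj (\<lambda>x. A *v x)"
    using matrix_left_invertible_ker invertible_left_inverse invertible_right_inverse
      matrix_right_invertible_surjective by metis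
  then obtain b where "A *v b = c" by (metis surjD)
  then have "\<forall>k. (\<Sum>l\<in>UNIV. S k l * b$l) = c$k"
    unfolding A_def matrix_vector_mult_def by (auto simp: vec_eq_iff)
  then show ?thesis by blast
qed

context prob_space
begin

lemma resid_normal:
  fixes Zs :: "'p::finite \<Rightarrow> 'a \<Rightarrow> real"
  assumes R: "is_lin_resid M U Zs S R" and U: "sqi M U" and Zs: "\<And>m. sqi M (Zs m)"
  shows "\<exists>c b. R = (\<lambda>\<omega>. U \<omega> - c - (\<Sum>m\<in>S. b m * Zs m \<omega>))"
    and "\<And>m. m \<in> S \<Longrightarrow> cov M R (Zs m) = 0"
proof -
  obtain c b where Rdef: "R = (\<lambda>\<omega>. U \<omega> - c - (\<Sum>m\<in>S. b m * Zs m \<omega>))"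
    and min: "\<And>c' b'. integral\<^sup>L M (\<lambda>\<omega>. (U \<omega> - c - (\<Sum>m\<in>S. b m * Zs m \<omega>))^2)
                \<le> integral\<^sup>L M (\<lambda>\<omega>. (U \<omega> - c' - (\<Sum>m\<in>S. b' m * Zs m \<omega>))^2)"
    using R unfolding is_lin_resid_def by blast
  show "\<exists>c b. R = (\<lambda>\<omega>. U \<omega> - c - (\<Sum>m\<in>S. b m * Zs m \<omega>))" using Rdef by blast
  have sR: "sqi M R" unfolding Rdef
    by (intro sqi_diff sqi_sum sqi_cmult U Zs) auto
  have E0: "integral\<^sup>L M (\<lambda>\<omega>. R \<omega> * 1) = 0"
  proof (rule variational[OF sR])
    fix t
    show "integral\<^sup>L M (\<lambda>x. (R x)\<^sup>2) \<le> integral\<^sup>L M (\<lambda>x. (R x - t * 1)\<^sup>2)"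
      using min[of "c + t" b] unfolding Rdef by (simp add: algebra_simps)
  qed simp
  fix m assume m: "m \<in> S"
  have E1: "integral\<^sup>L M (\<lambda>\<omega>. R \<omega> * Zs m \<omega>) = 0"
  proof (rule variational[OF sR Zs])
    fix t
    define b' where "b' = (\<lambda>m'. b m' + (if m' = m then t else 0))"
    have "(\<Sum>m'\<in>S. b' m' * Zs m' \<omega>) = (\<Sum>m'\<in>S. b m' * Zs m' \<omega>) + t * Zs m \<omega>" for \<omega>
    proof -
      have "(\<Sum>m'\<in>S. b' m' * Zs m' \<omega>) = (\<Sum>m'\<in>S. b m' * Zs m' \<omega> + (if m' = m then t * Zs m' \<omega> else 0))"
        unfolding b'_def by (rule sum.cong) (auto simp: algebra_simps)
      also have "\<dots> = (\<Sum>m'\<in>S. b m' * Zs m' \<omega>) + t * Zs m \<omega>"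
        using m by (simp add: sum.distrib)
      finally show ?thesis .
    qed
    then show "integral\<^sup>L M (\<lambda>x. (R x)\<^sup>2) \<le> integral\<^sup>L M (\<lambda>x. (R x - t * Zs m x)\<^sup>2)"
      using min[of c b'] unfolding Rdef by (simp add: algebra_simps)
  qed
  show "cov M R (Zs m) = 0" using E0 E1 unfolding cov_def by simp
qed

lemma resid_exists:
  fixes Zs :: "'p::finite \<Rightarrow> 'a \<Rightarrow> real"
  assumes U: "sqi M U" and Zs: "\<And>m. sqi M (Zs m)"
    and pd: "\<And>v::real^'p. v \<noteq> 0 \<Longrightarrow> (\<forall>l. l \<notin> S \<longrightarrow> v$l = 0) \<Longrightarrow>
              (\<Sum>l\<in>UNIV. \<Sum>m\<in>UNIV. cov M (Zs l) (Zs m) * v$l * v$m) > 0"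
  shows "\<exists>R. is_lin_resid M U Zs S R"
proof -
  define A' where "A' = (\<lambda>l m. if l \<in> S \<and> m \<in> S then cov M (Zs l) (Zs m) else if l = m then 1 else (0::real))"
  have pd': "(\<Sum>k\<in>UNIV. \<Sum>l\<in>UNIV. A' k l * v$k * v$l) > 0" if nz: "v \<noteq> 0" for v :: "real^'p"
  proof -
    define vS :: "real^'p" where "vS = (\<chi> l. if l \<in> S then v$l else 0)"
    have eq: "(\<Sum>k\<in>UNIV. \<Sum>l\<in>UNIV. A' k l * v$k * v$l) =
      (\<Sum>k\<in>UNIV. \<Sum>l\<in>UNIV. cov M (Zs k) (Zs l) * vS$k * vS$l) + (\<Sum>k\<in>UNIV. if k \<in> S then 0 else (v$k)^2)"
      unfolding sum.distrib[symmetric]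
    proof (rule sum.cong[OF refl])
      fix k
      show "(\<Sum>l\<in>UNIV. A' k l * v$k * v$l) =
        (\<Sum>l\<in>UNIV. cov M (Zs k) (Zs l) * vS$k * vS$l) + (if k \<in> S then 0 else (v$k)^2)"
      proof -
        have "(\<Sum>l\<in>UNIV. A' k l * v$k * v$l) = (\<Sum>l\<in>UNIV. if k \<in> S then (cov M (Zs k) (Zs l) * vS$k * vS$l)
             else (if k = l then (v$k)^2 else 0))"
          by (rule sum.cong) (auto simp: A'_def vS_def power2_eq_square)
        then show ?thesis by (cases "k \<in> S") (simp_all add: vS_def)
      qed
    qed
    show ?thesis
    proof (cases "vS = 0")
      case True
      then have "\<forall>l\<in>S. v$l = 0" unfolding vS_def by (auto simp: vec_eq_iff split: if_splits)
      moreover obtain l0 where "v$l0 \<noteq> 0" using nz by (metis vec_eq_iff zero_index)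
      ultimately have l0: "l0 \<notin> S" "v$l0 \<noteq> 0" by auto
      have "0 < (if l0 \<in> S then 0 else (v$l0)^2)" using l0 by simp
      also have "\<dots> \<le> (\<Sum>k\<in>UNIV. if k \<in> S then 0 else (v$k)^2)"
        by (rule member_le_sum) auto
      finally show ?thesis unfolding eq using True by simp
    next
      case False
      have "0 < (\<Sum>k\<in>UNIV. \<Sum>l\<in>UNIV. cov M (Zs k) (Zs l) * vS$k * vS$l)"
        by (rule pd[OF False]) (simp add: vS_def)
      moreover have "0 \<le> (\<Sum>k\<in>UNIV. if k \<in> S then 0 else (v$k)^2)" by (rule sum_nonneg) auto
      ultimately show ?thesis unfolding eq by simp
    qed
  qed
  obtain b :: "real^'p" where b: "\<And>k. (\<Sum>l\<in>UNIV. A' k l * b$l) = (\<chi> l. if l \<in> S then cov M (Zs l) U else 0)$k"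
    using pd_solve[OF pd'] by blast
  have bS: "(\<Sum>m\<in>S. cov M (Zs l) (Zs m) * b$m) = cov M (Zs l) U" if "l \<in> S" for l
  proof -
    have "(\<Sum>m\<in>UNIV. A' l m * b$m) = (\<Sum>m\<in>UNIV. if m \<in> S then cov M (Zs l) (Zs m) * b$m else 0)"
      using that by (intro sum.cong) (auto simp: A'_def)
    also have "\<dots> = (\<Sum>m\<in>S. cov M (Zs l) (Zs m) * b$m)"
      by (simp add: sum.If_cases)
    finally show ?thesis using b[of l] that by simp
  qed
  define c where "c = integral\<^sup>L M U - (\<Sum>m\<in>S. b$m * integral\<^sup>L M (Zs m))"
  define R where "R = (\<lambda>\<omega>. U \<omega> - c - (\<Sum>m\<in>S. b$m * Zs m \<omega>))"
  have sS: "sqi M (\<lambda>\<omega>. \<Sum>m\<in>S. b$m * Zs m \<omega>)" by (intro sqi_sum sqi_cmult Zs) auto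
  have sR: "sqi M R" unfolding R_def by (intro sqi_diff sqi_sum U sS) auto
  have ER: "integral\<^sup>L M R = 0"
  proof -
    have "integral\<^sup>L M (\<lambda>\<omega>. \<Sum>m\<in>S. b$m * Zs m \<omega>) = (\<Sum>m\<in>S. b$m * integral\<^sup>L M (Zs m))"
      using sqi_int[OF Zs] by (simp add: integral_sum)
    then show ?thesis unfolding R_def c_def using sqi_int[OF U] sqi_int[OF sS]
      by (simp add: prob_space)
  qed
  have ERZ: "integral\<^sup>L M (\<lambda>\<omega>. R \<omega> * Zs l \<omega>) = 0" if "l \<in> S" for l
  proof -
    have "cov M R (Zs l) = cov M (Zs l) R" by (rule cov_sym)
    also have "\<dots> = cov M (\<lambda>\<omega>. U \<omega> - c - (\<Sum>m\<in>S. b$m * Zs m \<omega>)) (Zs l)"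
      unfolding R_def by (rule cov_sym)
    also have "\<dots> = cov M U (Zs l) - (\<Sum>m\<in>S. b$m * cov M (Zs m) (Zs l))"
      using U Zs sS by (simp add: cov_diff_left sqi_diff cov_sum_left sqi_cmult cov_cmult_left)
    also have "\<dots> = 0" using bS[OF that] by (simp add: cov_sym mult.commute)
    finally show ?thesis using ER unfolding cov_def by simp
  qed
  have "is_lin_resid M U Zs S R"
    unfolding is_lin_resid_def
  proof (intro exI conjI allI)
    show "R = (\<lambda>\<omega>. U \<omega> - c - (\<Sum>m\<in>S. b$m * Zs m \<omega>))" by (simp add: R_def)
    fix c' b'
    define D where "D = (\<lambda>\<omega>. (c - c') + (\<Sum>m\<in>S. (b$m - b' m) * Zs m \<omega>))"
    have sD: "sqi M D" unfolding D_def by (intro sqi_add sqi_sum sqi_cmult Zs) auto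
    have eqf: "(\<lambda>\<omega>. (U \<omega> - c' - (\<Sum>m\<in>S. b' m * Zs m \<omega>))^2) =
      (\<lambda>\<omega>. (R \<omega>)^2 + (2 * (c - c')) * R \<omega> + (\<Sum>m\<in>S. (2 * (b$m - b' m)) * (R \<omega> * Zs m \<omega>)) + (D \<omega>)^2)"
    proof
      fix \<omega>
      have "U \<omega> - c' - (\<Sum>m\<in>S. b' m * Zs m \<omega>) = R \<omega> + D \<omega>"
        unfolding R_def D_def by (simp add: algebra_simps sum_subtractf)
      moreover have "2 * R \<omega> * D \<omega> = (2 * (c - c')) * R \<omega> + (\<Sum>m\<in>S. (2 * (b$m - b' m)) * (R \<omega> * Zs m \<omega>))"
        unfolding D_def by (simp add: algebra_simps sum_distrib_left)
      ultimately show "(U \<omega> - c' - (\<Sum>m\<in>S. b' m * Zs m \<omega>))^2 =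
        (R \<omega>)^2 + (2 * (c - c')) * R \<omega> + (\<Sum>m\<in>S. (2 * (b$m - b' m)) * (R \<omega> * Zs m \<omega>)) + (D \<omega>)^2"
        by (simp add: power2_sum)
    qed
    have i1: "integrable M (\<lambda>\<omega>. (R \<omega>)^2)" "integrable M (\<lambda>\<omega>. (D \<omega>)^2)"
      using sR sD unfolding sqi_def by auto
    have i2: "integrable M (\<lambda>\<omega>. (\<Sum>m\<in>S. (2 * (b$m - b' m)) * (R \<omega> * Zs m \<omega>)))"
      using sqi_mult[OF sR Zs] by auto
    have "integral\<^sup>L M (\<lambda>\<omega>. (\<Sum>m\<in>S. (2 * (b$m - b' m)) * (R \<omega> * Zs m \<omega>))) = 0"
      using sqi_mult[OF sR Zs] ERZ by (simp add: integral_sum)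
    then have "integral\<^sup>L M (\<lambda>\<omega>. (U \<omega> - c' - (\<Sum>m\<in>S. b' m * Zs m \<omega>))^2) =
        integral\<^sup>L M (\<lambda>\<omega>. (R \<omega>)^2) + integral\<^sup>L M (\<lambda>\<omega>. (D \<omega>)^2)"
      unfolding eqf using i1 i2 sqi_int[OF sR] ER by simp
    moreover have "integral\<^sup>L M (\<lambda>\<omega>. (D \<omega>)^2) \<ge> 0" by simp
    moreover have "(\<lambda>\<omega>. (U \<omega> - c - (\<Sum>m\<in>S. b$m * Zs m \<omega>))^2) = (\<lambda>\<omega>. (R \<omega>)^2)"
      by (simp add: R_def)
    ultimately show "integral\<^sup>L M (\<lambda>\<omega>. (U \<omega> - c - (\<Sum>m\<in>S. b$m * Zs m \<omega>))^2)
       \<le> integral\<^sup>L M (\<lambda>\<omega>. (U \<omega> - c' - (\<Sum>m\<in>S. b' m * Zs m \<omega>))^2)"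
      by simp
  qed
  then show ?thesis by blast
qed

end


context prob_space
begin

lemma cov_self_nonneg: assumes "sqi M f" shows "cov M f f \<ge> 0"
proof -
  have "cov M f f = variance f"
    using assms variance_eq[of f] sqi_int[OF assms] unfolding sqi_def cov_def by (simp add: power2_eq_square)
  then show ?thesis using variance_positive[of f] by simp
qed

lemma pop_sign:
  fixes Zc :: "'p::finite \<Rightarrow> 'a \<Rightarrow> real" and Xc :: "'d::finite \<Rightarrow> 'a \<Rightarrow> real"
    and g :: "real^'p" and bX :: "real^'d"
  assumes sZ: "\<And>m. sqi M (Zc m)" and sX: "\<And>j. sqi M (Xc j)"
   and pdA: "\<And>v::real^'p. v \<noteq> 0 \<Longrightarrow> (\<Sum>l\<in>UNIV. \<Sum>m\<in>UNIV. cov M (Zc l) (Zc m) * v$l * v$m) > 0"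
   and geq: "\<And>l. (\<Sum>m\<in>UNIV. cov M (Zc l) (Zc m) * g$m) = (\<Sum>j\<in>UNIV. cov M (Zc l) (Xc j) * bX$j)"
   and bX: "\<And>j. bX$j \<le> 0"
   and pc: "\<And>j. partial_corr M (Zc k) (Xc j) Zc (-{k}) > 0"
  shows "g$k \<le> 0"
proof -
  have ex: "\<exists>R. is_lin_resid M U Zc (-{k}) R" if "sqi M U" for U
    by (rule resid_exists[OF that sZ pdA])
  define R1 where "R1 = (SOME R. is_lin_resid M (Zc k) Zc (-{k}) R)"
  define R2 where "R2 = (\<lambda>j. SOME R. is_lin_resid M (Xc j) Zc (-{k}) R)"
  have R1: "is_lin_resid M (Zc k) Zc (-{k}) R1"
    unfolding R1_def using ex[OF sZ] by (rule someI_ex)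
  have R2: "is_lin_resid M (Xc j) Zc (-{k}) (R2 j)" for j
    unfolding R2_def using ex[OF sX] by (rule someI_ex)
  obtain c1 w where R1eq0: "R1 = (\<lambda>\<omega>. Zc k \<omega> - c1 - (\<Sum>m\<in>-{k}. w m * Zc m \<omega>))"
    using resid_normal(1)[OF R1 sZ sZ] by blast
  have R1Z: "m \<noteq> k \<Longrightarrow> cov M R1 (Zc m) = 0" for m
    using resid_normal(2)[OF R1 sZ sZ] by simp
  have sR1: "sqi M R1" unfolding R1eq0 by (intro sqi_diff sqi_sum sqi_cmult sZ) auto
  define u :: "real^'p" where "u = (\<chi> m. if m = k then 1 else - w m)"
  have R1eq: "R1 = (\<lambda>\<omega>. (\<Sum>m\<in>UNIV. u$m * Zc m \<omega>) - c1)"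
  proof
    fix \<omega>
    have "(\<Sum>m\<in>UNIV. u$m * Zc m \<omega>) = u$k * Zc k \<omega> + (\<Sum>m\<in>-{k}. u$m * Zc m \<omega>)"
      using sum.remove[of UNIV k "\<lambda>m. u$m * Zc m \<omega>"] by (simp add: Compl_eq_Diff_UNIV)
    also have "(\<Sum>m\<in>-{k}. u$m * Zc m \<omega>) = - (\<Sum>m\<in>-{k}. w m * Zc m \<omega>)"
      unfolding sum_negf[symmetric] by (rule sum.cong) (auto simp: u_def)
    finally show "R1 \<omega> = (\<Sum>m\<in>UNIV. u$m * Zc m \<omega>) - c1"
      unfolding R1eq0 by (simp add: u_def)
  qed
  have covR: "cov M F R1 = (\<Sum>m\<in>UNIV. u$m * cov M (Zc m) F)" if sF: "sqi M F" for F
  proof -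
    have s1: "sqi M (\<lambda>\<omega>. \<Sum>m\<in>UNIV. u$m * Zc m \<omega>)" by (intro sqi_sum sqi_cmult sZ) auto
    have "cov M F R1 = cov M R1 F" by (rule cov_sym)
    also have "\<dots> = cov M (\<lambda>\<omega>. \<Sum>m\<in>UNIV. u$m * Zc m \<omega>) F"
      unfolding R1eq using s1 sF by (simp add: cov_diff_left)
    also have "\<dots> = (\<Sum>m\<in>UNIV. u$m * cov M (Zc m) F)"
      using sF sZ by (simp add: cov_sum_left sqi_cmult cov_cmult_left)
    finally show ?thesis .
  qed
  have zero: "cov M (Zc m) R1 = 0" if "m \<noteq> k" for m
    using R1Z[OF that] by (simp add: cov_sym)
  have pos: "cov M (Xc j) R1 > 0" for j
  proof -
    obtain c2 w2 where R2eq: "R2 j = (\<lambda>\<omega>. Xc j \<omega> - c2 - (\<Sum>m\<in>-{k}. w2 m * Zc m \<omega>))"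
      using resid_normal(1)[OF R2 sX sZ] by blast
    have sR2: "sqi M (R2 j)" unfolding R2eq by (intro sqi_diff sqi_sum sqi_cmult sZ sX) auto
    have s1: "sqi M (\<lambda>\<omega>. \<Sum>m\<in>-{k}. w2 m * Zc m \<omega>)" by (intro sqi_sum sqi_cmult sZ) auto
    have "cov M R1 (R2 j) = cov M (R2 j) R1" by (rule cov_sym)
    also have "\<dots> = cov M (\<lambda>\<omega>. Xc j \<omega> - c2) R1 - cov M (\<lambda>\<omega>. \<Sum>m\<in>-{k}. w2 m * Zc m \<omega>) R1"
      unfolding R2eq by (rule cov_diff_left[OF sqi_diff[OF sX sqi_const] s1 sR1])
    also have "cov M (\<lambda>\<omega>. Xc j \<omega> - c2) R1 = cov M (Xc j) R1"
      using cov_diff_left[OF sX sqi_const sR1] by simp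
    also have "cov M (\<lambda>\<omega>. \<Sum>m\<in>-{k}. w2 m * Zc m \<omega>) R1 = (\<Sum>m\<in>-{k}. w2 m * cov M (Zc m) R1)"
      using sZ sR1 by (simp add: cov_sum_left sqi_cmult cov_cmult_left)
    also have "\<dots> = 0" using zero by simp
    finally have eq: "cov M R1 (R2 j) = cov M (Xc j) R1" by simp
    have "0 < partial_corr M (Zc k) (Xc j) Zc (-{k})" by (rule pc)
    also have "\<dots> = cov M R1 (R2 j) / (sqrt (cov M R1 R1) * sqrt (cov M (R2 j) (R2 j)))"
      unfolding partial_corr_def corr_def R1_def R2_def by simp
    finally have "0 < cov M R1 (R2 j) / (sqrt (cov M R1 R1) * sqrt (cov M (R2 j) (R2 j)))" .
    moreover have "sqrt (cov M R1 R1) * sqrt (cov M (R2 j) (R2 j)) \<ge> 0"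
      using cov_self_nonneg[OF sR1] cov_self_nonneg[OF sR2] by simp
    ultimately have "cov M R1 (R2 j) > 0"
      by (simp add: zero_less_divide_iff)
    then show ?thesis using eq by simp
  qed
  define V where "V = cov M (Zc k) R1"
  define T where "T = (\<Sum>l\<in>UNIV. u$l * (\<Sum>m\<in>UNIV. cov M (Zc l) (Zc m) * g$m))"
  have Ta: "T = g$k * V"
  proof -
    have "T = (\<Sum>l\<in>UNIV. \<Sum>m\<in>UNIV. g$m * (u$l * cov M (Zc l) (Zc m)))"
      unfolding T_def by (simp add: sum_distrib_left mult.commute mult.left_commute)
    also have "\<dots> = (\<Sum>m\<in>UNIV. \<Sum>l\<in>UNIV. g$m * (u$l * cov M (Zc l) (Zc m)))"
      by (rule sum.swap)
    also have "\<dots> = (\<Sum>m\<in>UNIV. g$m * (\<Sum>l\<in>UNIV. u$l * cov M (Zc l) (Zc m)))"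
      by (simp add: sum_distrib_left)
    also have "\<dots> = (\<Sum>m\<in>UNIV. g$m * cov M (Zc m) R1)"
      using covR[OF sZ] by simp
    also have "\<dots> = (\<Sum>m\<in>UNIV. if m = k then g$k * V else 0)"
      by (rule sum.cong) (auto simp: zero V_def)
    finally show ?thesis by simp
  qed
  have Tb: "T \<le> 0"
  proof -
    have "T = (\<Sum>l\<in>UNIV. u$l * (\<Sum>j\<in>UNIV. cov M (Zc l) (Xc j) * bX$j))"
      unfolding T_def geq ..
    also have "\<dots> = (\<Sum>l\<in>UNIV. \<Sum>j\<in>UNIV. bX$j * (u$l * cov M (Zc l) (Xc j)))"
      by (simp add: sum_distrib_left mult.commute mult.left_commute)
    also have "\<dots> = (\<Sum>j\<in>UNIV. \<Sum>l\<in>UNIV. bX$j * (u$l * cov M (Zc l) (Xc j)))"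
      by (rule sum.swap)
    also have "\<dots> = (\<Sum>j\<in>UNIV. bX$j * (\<Sum>l\<in>UNIV. u$l * cov M (Zc l) (Xc j)))"
      by (simp add: sum_distrib_left)
    also have "\<dots> = (\<Sum>j\<in>UNIV. bX$j * cov M (Xc j) R1)"
      using covR[OF sX] by simp
    also have "\<dots> \<le> 0"
      using bX pos by (intro sum_nonpos mult_nonpos_nonneg) (auto intro: less_imp_le)
    finally show ?thesis .
  qed
  have Vpos: "V > 0"
  proof -
    have "u$k = 1" by (simp add: u_def)
    then have "u \<noteq> 0" by auto
    then have "0 < (\<Sum>l\<in>UNIV. \<Sum>m\<in>UNIV. cov M (Zc l) (Zc m) * u$l * u$m)" by (rule pdA)
    also have "\<dots> = (\<Sum>l\<in>UNIV. \<Sum>m\<in>UNIV. u$m * (u$l * cov M (Zc l) (Zc m)))"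
      by (simp add: mult.commute mult.left_commute)
    also have "\<dots> = (\<Sum>m\<in>UNIV. \<Sum>l\<in>UNIV. u$m * (u$l * cov M (Zc l) (Zc m)))"
      by (rule sum.swap)
    also have "\<dots> = (\<Sum>l\<in>UNIV. u$l * cov M (Zc l) R1)"
      using covR[OF sZ] by (simp add: sum_distrib_left)
    also have "\<dots> = (\<Sum>l\<in>UNIV. if l = k then V else 0)"
      by (rule sum.cong) (auto simp: zero V_def u_def)
    finally show ?thesis by simp
  qed
  show ?thesis using Ta Tb Vpos by (auto simp: mult_le_0_iff)
qed

end


definition qf :: "('p::finite \<Rightarrow> 'p \<Rightarrow> real) \<Rightarrow> real^'p \<Rightarrow> real" where
  "qf S v = (\<Sum>k\<in>UNIV. \<Sum>l\<in>UNIV. S k l * v$k * v$l)"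

lemma qf_err:
  fixes S A :: "'p::finite \<Rightarrow> 'p \<Rightarrow> real"
  assumes err: "\<And>k l. \<bar>S k l - A k l\<bar> \<le> \<tau>"
  shows "\<bar>qf S v - qf A v\<bar> \<le> \<tau> * real CARD('p)^2 * (norm v)^2"
proof -
  have t0: "\<tau> \<ge> 0" using err[of undefined undefined] by linarith
  have "qf S v - qf A v = (\<Sum>k\<in>UNIV. \<Sum>l\<in>UNIV. (S k l - A k l) * v$k * v$l)"
    unfolding qf_def sum_subtractf[symmetric] by (simp add: algebra_simps)
  also have "\<bar>\<dots>\<bar> \<le> (\<Sum>k\<in>UNIV. \<bar>\<Sum>l\<in>UNIV. (S k l - A k l) * v$k * v$l\<bar>)" by (rule sum_abs)
  also have "\<dots> \<le> (\<Sum>k\<in>(UNIV::'p set). \<Sum>l\<in>(UNIV::'p set). \<tau> * (norm v * norm v))"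
  proof (rule sum_mono)
    fix k
    have "\<bar>\<Sum>l\<in>UNIV. (S k l - A k l) * v$k * v$l\<bar> \<le> (\<Sum>l\<in>UNIV. \<bar>(S k l - A k l) * v$k * v$l\<bar>)"
      by (rule sum_abs)
    also have "\<dots> \<le> (\<Sum>l\<in>(UNIV::'p set). \<tau> * (norm v * norm v))"
    proof (rule sum_mono)
      fix l
      have "\<bar>(S k l - A k l) * v$k * v$l\<bar> = \<bar>S k l - A k l\<bar> * (\<bar>v$k\<bar> * \<bar>v$l\<bar>)"
        by (simp add: abs_mult)
      also have "\<dots> \<le> \<tau> * (norm v * norm v)"
        by (intro mult_mono err component_le_norm_cart) (auto simp: t0)
      finally show "\<bar>(S k l - A k l) * v$k * v$l\<bar> \<le> \<tau> * (norm v * norm v)" .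
    qed
    finally show "\<bar>\<Sum>l\<in>UNIV. (S k l - A k l) * v$k * v$l\<bar> \<le> (\<Sum>l\<in>(UNIV::'p set). \<tau> * (norm v * norm v))" .
  qed
  also have "\<dots> = \<tau> * real CARD('p)^2 * (norm v)^2"
    by (simp add: power2_eq_square)
  finally show ?thesis .
qed

lemma qf_diff:
  fixes S :: "'p::finite \<Rightarrow> 'p \<Rightarrow> real"
  assumes sym: "\<And>k l. S k l = S l k"
  shows "qf S b - qf S b0 = qf S (b - b0) + 2 * (\<Sum>k\<in>UNIV. (b - b0)$k * (\<Sum>l\<in>UNIV. S k l * b0$l))"
proof -
  define d where "d = b - b0"
  have bd: "b$k = b0$k + d$k" for k unfolding d_def by simp
  have "qf S b - qf S b0 = (\<Sum>k\<in>UNIV. \<Sum>l\<in>UNIV. S k l * d$k * d$l + S k l * d$k * b0$l + S k l * b0$k * d$l)"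
    unfolding qf_def sum_subtractf[symmetric] bd by (intro sum.cong refl) (simp add: algebra_simps)
  also have "\<dots> = qf S d + (\<Sum>k\<in>UNIV. \<Sum>l\<in>UNIV. S k l * d$k * b0$l) + (\<Sum>k\<in>UNIV. \<Sum>l\<in>UNIV. S k l * b0$k * d$l)"
    unfolding qf_def by (simp add: sum.distrib)
  also have "(\<Sum>k\<in>UNIV. \<Sum>l\<in>UNIV. S k l * b0$k * d$l) = (\<Sum>l\<in>UNIV. \<Sum>k\<in>UNIV. S k l * b0$k * d$l)"
    by (rule sum.swap)
  also have "\<dots> = (\<Sum>k\<in>UNIV. \<Sum>l\<in>UNIV. S k l * d$k * b0$l)"
    by (intro sum.cong refl) (simp add: sym[of _ "_"] mult.commute mult.left_commute)
  finally show ?thesis unfolding d_def[symmetric]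
    by (simp add: sum_distrib_left mult.commute mult.left_commute)
qed

lemma det_bound:
  fixes A Sh :: "'p::finite \<Rightarrow> 'p \<Rightarrow> real" and c ch :: "'p \<Rightarrow> real" and b b0 :: "real^'p"
  assumes lam: "lm > 0" "\<And>v. qf A v \<ge> lm * (norm v)^2"
    and sym: "\<And>k l. Sh k l = Sh l k"
    and Ab0: "\<And>k. (\<Sum>l\<in>UNIV. A k l * b0$l) = c k"
    and errS: "\<And>k l. \<bar>Sh k l - A k l\<bar> \<le> \<tau>" and errc: "\<And>k. \<bar>ch k - c k\<bar> \<le> \<tau>"
    and small: "\<tau> * real CARD('p)^2 \<le> lm / 2"
    and qle: "qf Sh b - 2 * (\<Sum>k\<in>UNIV. b$k * ch k) \<le> qf Sh b0 - 2 * (\<Sum>k\<in>UNIV. b0$k * ch k)"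
  shows "norm (b - b0) \<le> 4 * real CARD('p) * (\<tau> * (real CARD('p) * norm b0 + 1)) / lm"
proof -
  define n where "n = real CARD('p)"
  define d where "d = b - b0"
  define K where "K = \<tau> * (n * norm b0 + 1)"
  have t0: "\<tau> \<ge> 0" using errc[of undefined] by linarith
  have Qd: "qf Sh d \<ge> (lm/2) * (norm d)^2"
  proof -
    have "\<bar>qf Sh d - qf A d\<bar> \<le> \<tau> * n^2 * (norm d)^2" unfolding n_def by (rule qf_err[OF errS])
    also have "\<dots> \<le> (lm/2) * (norm d)^2" using small unfolding n_def by (intro mult_right_mono) auto
    finally show ?thesis using lam(2)[of d] by linarith
  qed
  define r where "r = (\<lambda>k. (\<Sum>l\<in>UNIV. Sh k l * b0$l) - ch k)"
  have rb: "\<bar>r k\<bar> \<le> K" for k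
  proof -
    have "r k = (\<Sum>l\<in>UNIV. (Sh k l - A k l) * b0$l) - (ch k - c k)"
      unfolding r_def using Ab0[of k] by (simp add: algebra_simps sum_subtractf)
    also have "\<bar>\<dots>\<bar> \<le> \<bar>\<Sum>l\<in>UNIV. (Sh k l - A k l) * b0$l\<bar> + \<tau>"
      using errc[of k] by linarith
    also have "\<bar>\<Sum>l\<in>UNIV. (Sh k l - A k l) * b0$l\<bar> \<le> (\<Sum>l\<in>(UNIV::'p set). \<tau> * norm b0)"
    proof (rule order.trans[OF sum_abs[of "\<lambda>l. (Sh k l - A k l) * b0$l" UNIV]], rule sum_mono)
      fix l show "\<bar>(Sh k l - A k l) * b0$l\<bar> \<le> \<tau> * norm b0"
        unfolding abs_mult by (intro mult_mono errS component_le_norm_cart) (auto simp: t0)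
    qed
    also have "(\<Sum>l\<in>(UNIV::'p set). \<tau> * norm b0) = n * \<tau> * norm b0" unfolding n_def by simp
    finally show ?thesis unfolding K_def by (simp add: algebra_simps)
  qed
  have K0: "K \<ge> 0" unfolding K_def n_def using t0 by simp
  have dr: "\<bar>\<Sum>k\<in>UNIV. d$k * r k\<bar> \<le> n * norm d * K"
  proof -
    have "\<bar>\<Sum>k\<in>UNIV. d$k * r k\<bar> \<le> (\<Sum>k\<in>(UNIV::'p set). norm d * K)"
    proof (rule order.trans[OF sum_abs[of "\<lambda>k. d$k * r k" UNIV]], rule sum_mono)
      fix k show "\<bar>d$k * r k\<bar> \<le> norm d * K"
        unfolding abs_mult by (intro mult_mono rb component_le_norm_cart) auto
    qed
    then show ?thesis unfolding n_def by simp
  qed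
  have "qf Sh b - qf Sh b0 = qf Sh d + 2 * (\<Sum>k\<in>UNIV. d$k * (\<Sum>l\<in>UNIV. Sh k l * b0$l))"
    unfolding d_def by (rule qf_diff[OF sym])
  moreover have "(\<Sum>k\<in>UNIV. b$k * ch k) - (\<Sum>k\<in>UNIV. b0$k * ch k) = (\<Sum>k\<in>UNIV. d$k * ch k)"
    unfolding d_def sum_subtractf[symmetric] by (simp add: algebra_simps)
  moreover have "(\<Sum>k\<in>UNIV. d$k * r k) = (\<Sum>k\<in>UNIV. d$k * (\<Sum>l\<in>UNIV. Sh k l * b0$l)) - (\<Sum>k\<in>UNIV. d$k * ch k)"
    unfolding r_def sum_subtractf[symmetric] by (simp add: algebra_simps)
  ultimately have "qf Sh d + 2 * (\<Sum>k\<in>UNIV. d$k * r k) \<le> 0" using qle by linarith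
  then have "(lm/2) * (norm d)^2 \<le> 2 * (n * norm d * K)" using Qd dr by linarith
  then have main: "norm d * ((lm/2) * norm d) \<le> norm d * (2 * n * K)"
    by (simp add: power2_eq_square algebra_simps)
  show ?thesis
  proof (cases "norm d = 0")
    case True
    have "0 \<le> 4 * n * K / lm" using K0 lam(1) n_def by simp
    then show ?thesis using True unfolding d_def n_def K_def by simp
  next
    case False
    then have "(lm/2) * norm d \<le> 2 * n * K" using main by (simp add: mult_le_cancel_left)
    then have "norm d \<le> 4 * n * K / lm" using lam(1) by (simp add: field_simps)
    then show ?thesis unfolding d_def n_def K_def .
  qed
qed

lemma lam_exists:
  fixes A :: "'p::finite \<Rightarrow> 'p \<Rightarrow> real"
  assumes pd: "\<And>v::real^'p. v \<noteq> 0 \<Longrightarrow> qf A v > 0"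
  shows "\<exists>lm>0. \<forall>v. qf A v \<ge> lm * (norm v)^2"
proof -
  have cont: "continuous_on (sphere 0 1) (qf A)"
    unfolding qf_def by (intro continuous_intros)
  have ne: "sphere (0::real^'p) 1 \<noteq> {}"
    by (metis ex_in_conv mem_sphere_0 norm_axis_1 )
  obtain x where x: "x \<in> sphere 0 1" "\<And>y. y \<in> sphere 0 1 \<Longrightarrow> qf A x \<le> qf A y"
    using continuous_attains_inf[OF compact_sphere ne cont] by blast
  have x0: "x \<noteq> 0" using x(1) by auto
  have scale: "qf A (t *\<^sub>R v) = t^2 * qf A v" for t v
    unfolding qf_def by (simp add: sum_distrib_left power2_eq_square algebra_simps)
  have "qf A v \<ge> qf A x * (norm v)^2" for v
  proof (cases "v = 0")
    case True then show ?thesis by (simp add: qf_def)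
  next
    case False
    then have "(1 / norm v) *\<^sub>R v \<in> sphere 0 1" by simp
    then have "qf A x \<le> qf A ((1 / norm v) *\<^sub>R v)" by (rule x(2))
    also have "\<dots> = qf A v / (norm v)^2" unfolding scale by (simp add: power_one_over)
    finally show ?thesis using False by (simp add: field_simps)
  qed
  then show ?thesis using pd[OF x0] by blast
qed



lemma var_decomp:
  fixes u :: "nat \<Rightarrow> real"
  assumes N: "N > 0"
  shows "(\<Sum>i<N. (u i - a)^2) = real N * ((\<Sum>i<N. u i) / real N - a)^2 + (\<Sum>i<N. (u i - (\<Sum>j<N. u j) / real N)^2)"
proof -
  define m where "m = (\<Sum>j<N. u j) / real N"
  have sm: "(\<Sum>i<N. u i - m) = 0" unfolding m_def using N by (simp add: sum_subtractf)
  have "(\<Sum>i<N. (u i - a)^2) = (\<Sum>i<N. (u i - m)^2 + 2 * (m - a) * (u i - m) + (m - a)^2)"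
    by (intro sum.cong refl) (simp add: power2_eq_square algebra_simps)
  also have "\<dots> = (\<Sum>i<N. (u i - m)^2) + 2 * (m - a) * (\<Sum>i<N. u i - m) + real N * (m - a)^2"
    by (simp add: sum.distrib sum_distrib_left)
  finally show ?thesis unfolding sm m_def[symmetric] by simp
qed

lemma cent:
  fixes x w :: "nat \<Rightarrow> real"
  assumes N: "N > 0"
  shows "(\<Sum>i<N. (x i - (\<Sum>j<N. x j) / real N) * (w i - (\<Sum>j<N. w j) / real N)) / real N
     = (\<Sum>i<N. x i * w i) / real N - ((\<Sum>j<N. x j) / real N) * ((\<Sum>j<N. w j) / real N)"
proof -
  define mx where "mx = (\<Sum>j<N. x j) / real N"
  define mw where "mw = (\<Sum>j<N. w j) / real N"
  have sx: "(\<Sum>j<N. x j) = real N * mx" and sw: "(\<Sum>j<N. w j) = real N * mw"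
    unfolding mx_def mw_def using N by auto
  have "(\<Sum>i<N. (x i - mx) * (w i - mw)) = (\<Sum>i<N. x i * w i) - mw * (\<Sum>i<N. x i) - mx * (\<Sum>i<N. w i) + real N * mx * mw"
    by (simp add: algebra_simps sum.distrib sum_subtractf sum_distrib_left)
  also have "\<dots> = (\<Sum>i<N. x i * w i) - real N * (mx * mw)" unfolding sx sw by (simp add: algebra_simps)
  finally show ?thesis unfolding mx_def[symmetric] mw_def[symmetric] using N
    by (simp add: diff_divide_distrib)
qed

definition "sbar N y = (\<Sum>i<N. y i) / real N"
definition "sSh N (z :: nat \<Rightarrow> real^'p) k l =
   (\<Sum>i<N. (z i $ k - sbar N (\<lambda>i. z i $ k)) * (z i $ l - sbar N (\<lambda>i. z i $ l))) / real N"
definition "sch N y (z :: nat \<Rightarrow> real^'p) k =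
   (\<Sum>i<N. (z i $ k - sbar N (\<lambda>i. z i $ k)) * (y i - sbar N y)) / real N"

lemma sse_decomp:
  fixes y :: "nat \<Rightarrow> real" and z :: "nat \<Rightarrow> real^'p::finite" and b :: "real^'p"
  assumes N: "N > 0"
  shows "(\<Sum>i<N. (y i - a - z i \<bullet> b)^2) =
     real N * (sbar N y - (\<Sum>k\<in>UNIV. sbar N (\<lambda>i. z i $ k) * b$k) - a)^2
     + (\<Sum>i<N. (y i - sbar N y)^2) + real N * (qf (sSh N z) b - 2 * (\<Sum>k\<in>UNIV. b$k * sch N y z k))"
proof -
  define u where "u = (\<lambda>i. y i - z i \<bullet> b)"
  define zb where "zb = (\<lambda>k. sbar N (\<lambda>i. z i $ k))"
  define yt where "yt = (\<lambda>i. y i - sbar N y)"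
  define zt where "zt = (\<lambda>i k. z i $ k - zb k)"
  define w where "w = (\<lambda>i. \<Sum>k\<in>UNIV. zt i k * b$k)"
  have zi: "z i \<bullet> b = (\<Sum>k\<in>UNIV. z i $ k * b$k)" for i by (simp add: inner_vec_def)
  have ub: "(\<Sum>j<N. u j) / real N = sbar N y - (\<Sum>k\<in>UNIV. zb k * b$k)"
  proof -
    have sw: "(\<Sum>j<N. \<Sum>k\<in>UNIV. z j $ k * b$k) = (\<Sum>k\<in>UNIV. \<Sum>j<N. z j $ k * b$k)"
      by (rule sum.swap)
    have "(\<Sum>j<N. u j) = (\<Sum>j<N. y j) - (\<Sum>j<N. \<Sum>k\<in>UNIV. z j $ k * b$k)"
      unfolding u_def zi by (simp add: sum_subtractf)
    also have "\<dots> = (\<Sum>j<N. y j) - (\<Sum>k\<in>UNIV. (\<Sum>j<N. z j $ k) * b$k)"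
      unfolding sw by (simp add: sum_distrib_right)
    finally have "(\<Sum>j<N. u j) / real N = (\<Sum>j<N. y j) / real N - (\<Sum>k\<in>UNIV. (\<Sum>j<N. z j $ k) * b$k) / real N"
      by (simp add: diff_divide_distrib)
    also have "(\<Sum>k\<in>UNIV. (\<Sum>j<N. z j $ k) * b$k) / real N = (\<Sum>k\<in>UNIV. zb k * b$k)"
      unfolding zb_def sbar_def by (simp add: times_divide_eq_left sum_divide_distrib[symmetric])
    finally show ?thesis unfolding sbar_def .
  qed
  have uu: "u i - (\<Sum>j<N. u j) / real N = yt i - w i" for i
  proof -
    have "u i - (\<Sum>j<N. u j) / real N = u i - (sbar N y - (\<Sum>k\<in>UNIV. zb k * b$k))"
      by (simp only: ub)
    also have "\<dots> = yt i - w i"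
      unfolding u_def yt_def w_def zt_def zi by (simp add: sum_subtractf left_diff_distrib)
    finally show ?thesis .
  qed
  have "(\<Sum>i<N. (y i - a - z i \<bullet> b)^2) = (\<Sum>i<N. (u i - a)^2)"
    unfolding u_def by (simp add: algebra_simps)
  also have "\<dots> = real N * ((\<Sum>j<N. u j) / real N - a)^2 + (\<Sum>i<N. (yt i - w i)^2)"
    unfolding var_decomp[OF N] uu ..
  also have "(\<Sum>i<N. (yt i - w i)^2) = (\<Sum>i<N. (yt i)^2) - 2 * (\<Sum>i<N. yt i * w i) + (\<Sum>i<N. (w i)^2)"
    by (simp add: power2_diff sum.distrib sum_subtractf sum_distrib_left mult.assoc)
  also have "(\<Sum>i<N. yt i * w i) = real N * (\<Sum>k\<in>UNIV. b$k * sch N y z k)"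
  proof -
    have "(\<Sum>i<N. yt i * w i) = (\<Sum>i<N. \<Sum>k\<in>UNIV. b$k * (zt i k * yt i))"
      unfolding w_def by (simp add: sum_distrib_left algebra_simps)
    also have "\<dots> = (\<Sum>k\<in>UNIV. \<Sum>i<N. b$k * (zt i k * yt i))" by (rule sum.swap)
    also have "\<dots> = (\<Sum>k\<in>UNIV. b$k * (real N * sch N y z k))"
      unfolding sch_def zt_def zb_def yt_def using N by (intro sum.cong refl) (simp add: sum_distrib_left[symmetric])
    finally show ?thesis by (simp add: sum_distrib_left algebra_simps)
  qed
  also have "(\<Sum>i<N. (w i)^2) = real N * qf (sSh N z) b"
  proof -
    have "(\<Sum>i<N. (w i)^2) = (\<Sum>i<N. \<Sum>k\<in>UNIV. \<Sum>l\<in>UNIV. b$k * b$l * (zt i k * zt i l))"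
      unfolding w_def power2_eq_square sum_product by (simp add: algebra_simps)
    also have "\<dots> = (\<Sum>k\<in>UNIV. \<Sum>i<N. \<Sum>l\<in>UNIV. b$k * b$l * (zt i k * zt i l))" by (rule sum.swap)
    also have "\<dots> = (\<Sum>k\<in>UNIV. \<Sum>l\<in>UNIV. \<Sum>i<N. b$k * b$l * (zt i k * zt i l))"
      by (intro sum.cong refl sum.swap)
    also have "\<dots> = (\<Sum>k\<in>UNIV. \<Sum>l\<in>UNIV. b$k * b$l * (real N * sSh N z k l))"
      unfolding sSh_def zt_def zb_def using N by (intro sum.cong refl) (simp add: sum_distrib_left[symmetric])
    finally show ?thesis unfolding qf_def by (simp add: sum_distrib_left algebra_simps)
  qed
  finally show ?thesis unfolding ub yt_def zb_def by (simp add: algebra_simps)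
qed

lemma ols_bound:
  fixes A :: "'p::finite \<Rightarrow> 'p \<Rightarrow> real" and c :: "'p \<Rightarrow> real" and b0 :: "real^'p"
    and y :: "nat \<Rightarrow> real" and z :: "nat \<Rightarrow> real^'p"
  assumes N: "N > 0" and lam: "lm > 0" "\<And>v. qf A v \<ge> lm * (norm v)^2"
    and Ab0: "\<And>k. (\<Sum>l\<in>UNIV. A k l * b0$l) = c k"
    and errS: "\<And>k l. \<bar>sSh N z k l - A k l\<bar> \<le> \<tau>" and errc: "\<And>k. \<bar>sch N y z k - c k\<bar> \<le> \<tau>"
    and small: "\<tau> * real CARD('p)^2 \<le> lm / 2"
  shows "norm (ols_slope N y z - b0) \<le> 4 * real CARD('p) * (\<tau> * (real CARD('p) * norm b0 + 1)) / lm"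
proof -
  define Sh where "Sh = sSh N z"
  define ch where "ch = sch N y z"
  define q where "q = (\<lambda>b::real^'p. qf Sh b - 2 * (\<Sum>k\<in>UNIV. b$k * ch k))"
  define C where "C = (\<Sum>i<N. (y i - sbar N y)^2)"
  define m where "m = (\<lambda>b::real^'p. sbar N y - (\<Sum>k\<in>UNIV. sbar N (\<lambda>i. z i $ k) * b$k))"
  define F where "F = (\<lambda>a (b::real^'p). \<Sum>i<N. (y i - a - z i \<bullet> b)^2)"
  have Fd: "F a b = real N * (m b - a)^2 + C + real N * q b" for a b
    unfolding F_def m_def C_def q_def Sh_def ch_def by (rule sse_decomp[OF N])
  have sym: "Sh k l = Sh l k" for k l unfolding Sh_def sSh_def by (simp add: mult.commute)
  have Shpd: "qf Sh v \<ge> (lm/2) * (norm v)^2" for v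
  proof -
    have "\<bar>qf Sh v - qf A v\<bar> \<le> \<tau> * real CARD('p)^2 * (norm v)^2"
      unfolding Sh_def by (rule qf_err[OF errS])
    also have "\<dots> \<le> (lm/2) * (norm v)^2" using small by (intro mult_right_mono) auto
    finally show ?thesis using lam(2)[of v] by linarith
  qed
  obtain bh :: "real^'p" where bh: "\<And>k. (\<Sum>l\<in>UNIV. Sh k l * bh$l) = (\<chi> k. ch k)$k"
  proof -
    have "\<exists>b::real^'p. \<forall>k. (\<Sum>l\<in>UNIV. Sh k l * b$l) = (\<chi> k. ch k)$k"
    proof (rule pd_solve)
      fix v :: "real^'p" assume "v \<noteq> 0"
      then have "(lm/2) * (norm v)^2 > 0" using lam(1) by simp
      then show "(\<Sum>k\<in>UNIV. \<Sum>l\<in>UNIV. Sh k l * v$k * v$l) > 0" using Shpd[of v] unfolding qf_def by linarith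
    qed
    then show ?thesis using that by blast
  qed
  have qmin: "q bh \<le> q b'" for b'
  proof -
    have "qf Sh b' - qf Sh bh = qf Sh (b' - bh) + 2 * (\<Sum>k\<in>UNIV. (b' - bh)$k * (\<Sum>l\<in>UNIV. Sh k l * bh$l))"
      by (rule qf_diff[OF sym])
    moreover have "(\<Sum>k\<in>UNIV. (b' - bh)$k * (\<Sum>l\<in>UNIV. Sh k l * bh$l)) = (\<Sum>k\<in>UNIV. b'$k * ch k) - (\<Sum>k\<in>UNIV. bh$k * ch k)"
      unfolding bh sum_subtractf[symmetric] by (simp add: algebra_simps)
    moreover have "qf Sh (b' - bh) \<ge> 0" using Shpd[of "b' - bh"] lam(1)
      by (metis (no_types, lifting) half_gt_zero mult_nonneg_nonneg order.trans less_imp_le zero_le_power2)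
    ultimately show ?thesis unfolding q_def by linarith
  qed
  have ex: "\<exists>p. (case p of (a, b) \<Rightarrow> \<forall>a' b'. F a b \<le> F a' b')"
  proof (intro exI[of _ "(m bh, bh)"], clarsimp)
    fix a' b'
    show "F (m bh) bh \<le> F a' b'" unfolding Fd using qmin[of b'] N
      by (simp add: mult_left_mono add_mono)
  qed
  define p where "p = (SOME p. case p of (a, b) \<Rightarrow> \<forall>a' b'. F a b \<le> F a' b')"
  have "case p of (a, b) \<Rightarrow> \<forall>a' b'. F a b \<le> F a' b'" unfolding p_def using ex by (rule someI_ex)
  then obtain a1 b1 where p: "p = (a1, b1)" and min: "\<And>a' b'. F a1 b1 \<le> F a' b'"
    by (cases p) auto
  have ols: "ols_slope N y z = b1"
    unfolding ols_slope_def using p unfolding p_def F_def by simp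
  have "real N * q b1 \<le> real N * q b0"
  proof -
    have "C + real N * q b1 \<le> F a1 b1" unfolding Fd by simp
    also have "\<dots> \<le> F (m b0) b0" by (rule min)
    also have "\<dots> = C + real N * q b0" unfolding Fd by simp
    finally show ?thesis by simp
  qed
  then have "q b1 \<le> q b0" using N by simp
  then show ?thesis unfolding ols
    by (intro det_bound[OF lam sym Ab0 _ _ small]) (auto simp: q_def Sh_def ch_def errS errc)
qed



definition ev_holds :: "'a measure \<Rightarrow> (nat \<Rightarrow> 'a \<Rightarrow> bool) \<Rightarrow> bool" where
  "ev_holds M Q \<longleftrightarrow> (\<forall>\<delta>>0. \<exists>N0. \<forall>N\<ge>N0. \<exists>A\<in>sets M. measure M A \<ge> 1 - \<delta> \<and> (\<forall>\<omega>\<in>A. Q N \<omega>))"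

lemma sum_UNIV_plus:
  "(\<Sum>x\<in>(UNIV::('a::finite + 'b::finite) set). f x) = (\<Sum>a\<in>UNIV. f (Inl a)) + (\<Sum>b\<in>UNIV. f (Inr b))"
  using sum.Plus[of "UNIV::'a set" "UNIV::'b set" f] by (simp add: comp_def)

lemma prod_err:
  fixes x y a b :: real
  assumes "\<bar>x - a\<bar> \<le> \<eta>" "\<bar>y - b\<bar> \<le> \<eta>" "\<eta> \<le> 1" "\<bar>a\<bar> \<le> B" "\<bar>b\<bar> \<le> B"
  shows "\<bar>x * y - a * b\<bar> \<le> \<eta> * (2 * B + 1)"
proof -
  have e0: "\<eta> \<ge> 0" using assms(1) by linarith
  have B0: "B \<ge> 0" using assms(4) by linarith
  have yb: "\<bar>y\<bar> \<le> B + 1" using assms by linarith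
  have "x * y - a * b = (x - a) * y + a * (y - b)" by (simp add: algebra_simps)
  then have "\<bar>x * y - a * b\<bar> \<le> \<bar>x - a\<bar> * \<bar>y\<bar> + \<bar>a\<bar> * \<bar>y - b\<bar>"
    by (simp add: abs_mult[symmetric] abs_triangle_ineq)
  also have "\<dots> \<le> \<eta> * (B + 1) + B * \<eta>"
    by (intro add_mono mult_mono assms yb e0) (auto simp: B0)
  finally show ?thesis by (simp add: algebra_simps)
qed

context prob_space
begin

lemma ev_true: "ev_holds M (\<lambda>N \<omega>. N \<ge> K)"
  unfolding ev_holds_def
  by (intro allI impI exI[of _ K]) (auto intro!: bexI[of _ "space M"] simp: prob_space)

lemma ev_conj: assumes "ev_holds M Q1" "ev_holds M Q2"
  shows "ev_holds M (\<lambda>N \<omega>. Q1 N \<omega> \<and> Q2 N \<omega>)"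
  unfolding ev_holds_def
proof (intro allI impI)
  fix \<delta> :: real assume d: "\<delta> > 0"
  obtain N1 where N1: "\<And>N. N \<ge> N1 \<Longrightarrow> \<exists>A\<in>sets M. measure M A \<ge> 1 - \<delta>/2 \<and> (\<forall>\<omega>\<in>A. Q1 N \<omega>)"
    using assms(1) d unfolding ev_holds_def by (meson half_gt_zero)
  obtain N2 where N2: "\<And>N. N \<ge> N2 \<Longrightarrow> \<exists>A\<in>sets M. measure M A \<ge> 1 - \<delta>/2 \<and> (\<forall>\<omega>\<in>A. Q2 N \<omega>)"
    using assms(2) d unfolding ev_holds_def by (meson half_gt_zero)
  show "\<exists>N0. \<forall>N\<ge>N0. \<exists>A\<in>sets M. 1 - \<delta> \<le> measure M A \<and> (\<forall>\<omega>\<in>A. Q1 N \<omega> \<and> Q2 N \<omega>)"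
  proof (intro exI[of _ "max N1 N2"] allI impI)
    fix N assume "max N1 N2 \<le> N"
    then obtain A B where A: "A \<in> sets M" "measure M A \<ge> 1 - \<delta>/2" "\<forall>\<omega>\<in>A. Q1 N \<omega>"
      and B: "B \<in> sets M" "measure M B \<ge> 1 - \<delta>/2" "\<forall>\<omega>\<in>B. Q2 N \<omega>"
    proof -
      have "N \<ge> N1" "N \<ge> N2" using \<open>max N1 N2 \<le> N\<close> by auto
      then show ?thesis using N1 N2 that by blast
    qed
    have "measure M (A \<union> B) = measure M A + measure M B - measure M (A \<inter> B)"
      using A B by (intro measure_Un3) (auto simp: fmeasurable_eq_sets)
    moreover have "measure M (A \<union> B) \<le> 1" by (rule prob_le_1)
    ultimately have "measure M (A \<inter> B) \<ge> 1 - \<delta>" using A B by linarith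
    then show "\<exists>A\<in>sets M. 1 - \<delta> \<le> measure M A \<and> (\<forall>\<omega>\<in>A. Q1 N \<omega> \<and> Q2 N \<omega>)"
      using A B by (intro bexI[of _ "A \<inter> B"]) auto
  qed
qed

lemma ev_mono: assumes "ev_holds M Q1" "\<And>N \<omega>. Q1 N \<omega> \<Longrightarrow> Q2 N \<omega>"
  shows "ev_holds M Q2"
  unfolding ev_holds_def
proof (intro allI impI)
  fix \<delta> :: real assume "\<delta> > 0"
  then obtain N0 where "\<forall>N\<ge>N0. \<exists>A\<in>sets M. measure M A \<ge> 1-\<delta> \<and> (\<forall>\<omega>\<in>A. Q1 N \<omega>)"
    using assms(1) unfolding ev_holds_def by blast
  then show "\<exists>N0. \<forall>N\<ge>N0. \<exists>A\<in>sets M. 1-\<delta> \<le> measure M A \<and> (\<forall>\<omega>\<in>A. Q2 N \<omega>)"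
    using assms(2) by blast
qed

lemma ev_all: "finite I \<Longrightarrow> (\<And>i. i \<in> I \<Longrightarrow> ev_holds M (Q i)) \<Longrightarrow> ev_holds M (\<lambda>N \<omega>. \<forall>i\<in>I. Q i N \<omega>)"
proof (induction I rule: finite_induct)
  case empty show ?case by (rule ev_mono[OF ev_true[of 0]]) simp
next
  case (insert a I)
  then have "ev_holds M (\<lambda>N \<omega>. Q a N \<omega> \<and> (\<forall>i\<in>I. Q i N \<omega>))" by (intro ev_conj) auto
  then show ?case by (rule ev_mono) auto
qed

lemma ev_from_conv: assumes c: "conv_in_prob M S c" and e: "e > 0"
  shows "ev_holds M (\<lambda>N \<omega>. dist (S N \<omega>) c \<le> e)"
  unfolding ev_holds_def
proof (intro allI impI)
  fix \<delta> :: real assume d: "\<delta> > 0"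
  show "\<exists>N0. \<forall>N\<ge>N0. \<exists>A\<in>sets M. 1 - \<delta> \<le> measure M A \<and> (\<forall>\<omega>\<in>A. dist (S N \<omega>) c \<le> e)"
    using c[unfolded conv_in_prob_def, rule_format, OF e d] .
qed

lemma conv_from_ev: assumes h: "\<And>e. e > 0 \<Longrightarrow> ev_holds M (\<lambda>N \<omega>. dist (S N \<omega>) c \<le> e)"
  shows "conv_in_prob M S c"
  unfolding conv_in_prob_def
proof (intro allI impI)
  fix e \<delta> :: real assume e: "e > 0" and d: "\<delta> > 0"
  show "\<exists>N0. \<forall>N\<ge>N0. \<exists>A\<in>sets M. 1 - \<delta> \<le> measure M A \<and> (\<forall>\<omega>\<in>A. dist (S N \<omega>) c \<le> e)"
    using h[OF e, unfolded ev_holds_def, rule_format, OF d] .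
qed

end

lemma stackV_nth[simp]:
  "stackV y z x w $ Inl i = y" "stackV y z x w $ Inr (Inl l) = z $ l"
  by (simp_all add: stackV_def vstack_def)

lemma vstack_nth[simp]: "vstack u v $ Inl i = u $ i" "vstack u v $ Inr j = v $ j"
  by (simp_all add: vstack_def)

lemma comp_meas: "Z \<in> borel_measurable M \<Longrightarrow> (\<lambda>\<omega>. (Z \<omega> :: real^'p) $ l) \<in> borel_measurable M"
  by (rule measurable_compose[OF _ borel_measurable_continuous_onI[OF continuous_on_component[OF continuous_on_id]]])



theorem proposition1:
  fixes M :: "'a measure"
    and Y :: "'a \<Rightarrow> real" and Z :: "'a \<Rightarrow> real^'p" and X W :: "'a \<Rightarrow> real^'d"
    and Ys :: "nat \<Rightarrow> 'a \<Rightarrow> real" and Zs :: "nat \<Rightarrow> 'a \<Rightarrow> real^'p"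
    and Xs Ws :: "nat \<Rightarrow> 'a \<Rightarrow> real^'d"
    and \<alpha> :: real and \<beta>Z :: "real^'p" and \<beta>X :: "real^'d"
    and P :: "'p set"
  assumes M: "prob_space M"
    and meas: "Y \<in> borel_measurable M" "Z \<in> borel_measurable M"
              "X \<in> borel_measurable M" "W \<in> borel_measurable M"
    and second_moments: "integrable M (\<lambda>\<omega>. (Y \<omega>)^2)"
              "\<And>l. integrable M (\<lambda>\<omega>. (Z \<omega> $ l)^2)"
              "\<And>j. integrable M (\<lambda>\<omega>. (X \<omega> $ j)^2)"
              "\<And>j. integrable M (\<lambda>\<omega>. (W \<omega> $ j)^2)"
    and pop_reg: "\<And>a bZ bX. integral\<^sup>L M (\<lambda>\<omega>. (1/2) * (Y \<omega> - \<alpha> - Z \<omega> \<bullet> \<beta>Z - X \<omega> \<bullet> \<beta>X)^2)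
                          \<le> integral\<^sup>L M (\<lambda>\<omega>. (1/2) * (Y \<omega> - a - Z \<omega> \<bullet> bZ - X \<omega> \<bullet> bX)^2)"
    and samples_meas: "\<And>i. Ys i \<in> borel_measurable M" "\<And>i. Zs i \<in> borel_measurable M"
              "\<And>i. Xs i \<in> borel_measurable M" "\<And>i. Ws i \<in> borel_measurable M"
    and ident_distr: "\<And>i. distr M borel (\<lambda>\<omega>. (Ys i \<omega>, Zs i \<omega>, Xs i \<omega>, Ws i \<omega>))
                          = distr M borel (\<lambda>\<omega>. (Y \<omega>, Z \<omega>, X \<omega>, W \<omega>))"
    and first_moments_conv: "\<And>k. conv_in_prob M
              (\<lambda>N \<omega>. (\<Sum>i<N. stackV (Ys i \<omega>) (Zs i \<omega>) (Xs i \<omega>) (Ws i \<omega>) $ k) / real N)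
              (integral\<^sup>L M (\<lambda>\<omega>. stackV (Y \<omega>) (Z \<omega>) (X \<omega>) (W \<omega>) $ k))"
    and second_moments_conv: "\<And>k k'. conv_in_prob M
              (\<lambda>N \<omega>. (\<Sum>i<N. stackV (Ys i \<omega>) (Zs i \<omega>) (Xs i \<omega>) (Ws i \<omega>) $ k
                             * stackV (Ys i \<omega>) (Zs i \<omega>) (Xs i \<omega>) (Ws i \<omega>) $ k') / real N)
              (integral\<^sup>L M (\<lambda>\<omega>. stackV (Y \<omega>) (Z \<omega>) (X \<omega>) (W \<omega>) $ k
                             * stackV (Y \<omega>) (Z \<omega>) (X \<omega>) (W \<omega>) $ k'))"
    and uncorr: "\<And>i j. cov M (\<lambda>\<omega>. Ys i \<omega> - \<alpha> - Zs i \<omega> \<bullet> \<beta>Z - Xs i \<omega> \<bullet> \<beta>X)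
                           (\<lambda>\<omega>. Ws i \<omega> $ j - Xs i \<omega> $ j) = 0"
    and pd_ZW: "pos_def_mat (covmat M (\<lambda>\<omega>. vstack (Z \<omega>) (W \<omega>)))"
    and pd_ZX: "pos_def_mat (covmat M (\<lambda>\<omega>. vstack (Z \<omega>) (X \<omega>)))"
    and no_benefit_X: "\<And>j. \<beta>X $ j \<le> 0"
    and no_benefit_Z: "\<And>l. l \<in> P \<Longrightarrow> \<beta>Z $ l \<le> 0"
    and weak_partial_PC: "\<And>l j. l \<in> P \<Longrightarrow>
              partial_corr M (\<lambda>\<omega>. Z \<omega> $ l) (\<lambda>\<omega>. X \<omega> $ j) (\<lambda>m \<omega>. Z \<omega> $ m) (- {l}) > 0"
  shows "\<exists>bias :: real^'p.
           conv_in_prob M (\<lambda>N \<omega>. ols_slope N (\<lambda>i. Ys i \<omega>) (\<lambda>i. Zs i \<omega>) - \<beta>Z) bias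
         \<and> (\<forall>k\<in>P. bias $ k \<le> 0)"
proof -
  interpret prob_space M by (rule M)
  define Zc where "Zc = (\<lambda>m \<omega>. Z \<omega> $ m)"
  define Xc where "Xc = (\<lambda>j \<omega>. X \<omega> $ j)"
  have sY: "sqi M Y" using meas(1) second_moments(1) by (simp add: sqi_def)
  have sZ: "\<And>m. sqi M (Zc m)" unfolding Zc_def sqi_def using comp_meas[OF meas(2)] second_moments(2) by auto
  have sX: "\<And>j. sqi M (Xc j)" unfolding Xc_def sqi_def using comp_meas[OF meas(3)] second_moments(3) by auto
  define A where "A = (\<lambda>l m. cov M (Zc l) (Zc m))"
  define Bm where "Bm = (\<lambda>l j. cov M (Zc l) (Xc j))"
  define c where "c = (\<lambda>l. cov M (Zc l) Y)"
  have pdA: "qf A v > 0" if v: "v \<noteq> 0" for v :: "real^'p"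
  proof -
    define x :: "real^('p+'d)" where "x = vstack v 0"
    obtain l where "v$l \<noteq> 0" using v by (metis vec_eq_iff zero_index)
    then have "x$Inl l \<noteq> 0" unfolding x_def by simp
    then have "x \<noteq> 0" by auto
    then have "0 < x \<bullet> (covmat M (\<lambda>\<omega>. vstack (Z \<omega>) (X \<omega>)) *v x)"
      using pd_ZX unfolding pos_def_mat_def by blast
    also have "x \<bullet> (covmat M (\<lambda>\<omega>. vstack (Z \<omega>) (X \<omega>)) *v x) = qf A v"
      unfolding inner_vec_def matrix_vector_mult_def covmat_def qf_def A_def Zc_def x_def
      by (simp add: sum_UNIV_plus sum_distrib_left algebra_simps)
    finally show ?thesis .
  qed
  define eps where "eps = (\<lambda>\<omega>. Y \<omega> - \<alpha> - Z \<omega> \<bullet> \<beta>Z - X \<omega> \<bullet> \<beta>X)"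
  have Zinner: "Z \<omega> \<bullet> b = (\<Sum>m\<in>UNIV. b$m * Zc m \<omega>)" for \<omega> b
    unfolding Zc_def inner_vec_def by (simp add: mult.commute)
  have Xinner: "X \<omega> \<bullet> b = (\<Sum>j\<in>UNIV. b$j * Xc j \<omega>)" for \<omega> b
    unfolding Xc_def inner_vec_def by (simp add: mult.commute)
  have sS1: "sqi M (\<lambda>\<omega>. \<Sum>m\<in>UNIV. \<beta>Z$m * Zc m \<omega>)" by (intro sqi_sum sqi_cmult sZ) auto
  have sS2: "sqi M (\<lambda>\<omega>. \<Sum>j\<in>UNIV. \<beta>X$j * Xc j \<omega>)" by (intro sqi_sum sqi_cmult sX) auto
  have seps: "sqi M eps"
  proof -
    have "eps = (\<lambda>\<omega>. Y \<omega> - \<alpha> - (\<Sum>m\<in>UNIV. \<beta>Z$m * Zc m \<omega>) - (\<Sum>j\<in>UNIV. \<beta>X$j * Xc j \<omega>))"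
      unfolding eps_def Zinner Xinner ..
    then show ?thesis using sY sS1 sS2 by (simp add: sqi_diff)
  qed
  have popmin: "integral\<^sup>L M (\<lambda>\<omega>. (eps \<omega>)^2) \<le> integral\<^sup>L M (\<lambda>\<omega>. (Y \<omega> - a - Z \<omega> \<bullet> bZ - X \<omega> \<bullet> bX)^2)" for a bZ bX
    using pop_reg[of a bZ bX] unfolding eps_def by simp
  have E1: "integral\<^sup>L M (\<lambda>\<omega>. eps \<omega> * 1) = 0"
  proof (rule variational[OF seps sqi_const])
    fix t
    show "integral\<^sup>L M (\<lambda>x. (eps x)\<^sup>2) \<le> integral\<^sup>L M (\<lambda>x. (eps x - t * 1)\<^sup>2)"
      using popmin[of "\<alpha> + t" \<beta>Z \<beta>X] unfolding eps_def by (simp add: algebra_simps)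
  qed
  have EZ: "integral\<^sup>L M (\<lambda>\<omega>. eps \<omega> * Zc k \<omega>) = 0" for k
  proof (rule variational[OF seps sZ])
    fix t
    have "Y \<omega> - \<alpha> - Z \<omega> \<bullet> (\<beta>Z + t *\<^sub>R axis k 1) - X \<omega> \<bullet> \<beta>X = eps \<omega> - t * Zc k \<omega>" for \<omega>
      unfolding eps_def Zc_def by (simp add: inner_add_right inner_axis algebra_simps)
    then show "integral\<^sup>L M (\<lambda>x. (eps x)\<^sup>2) \<le> integral\<^sup>L M (\<lambda>x. (eps x - t * Zc k x)\<^sup>2)"
      using popmin[of \<alpha> "\<beta>Z + t *\<^sub>R axis k 1" \<beta>X] by simp
  qed
  have ceps: "cov M eps (Zc l) = 0" for l
    using E1 EZ[of l] unfolding cov_def by simp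
  have cY: "c l = (\<Sum>m\<in>UNIV. A l m * \<beta>Z$m) + (\<Sum>j\<in>UNIV. Bm l j * \<beta>X$j)" for l
  proof -
    have Yeq: "Y = (\<lambda>\<omega>. ((\<alpha> + (\<Sum>m\<in>UNIV. \<beta>Z$m * Zc m \<omega>)) + (\<Sum>j\<in>UNIV. \<beta>X$j * Xc j \<omega>)) + eps \<omega>)"
      unfolding eps_def Zinner Xinner by auto
    have s0: "sqi M (\<lambda>\<omega>. \<alpha> + (\<Sum>m\<in>UNIV. \<beta>Z$m * Zc m \<omega>))" by (rule sqi_add[OF sqi_const sS1])
    have s00: "sqi M (\<lambda>\<omega>. (\<alpha> + (\<Sum>m\<in>UNIV. \<beta>Z$m * Zc m \<omega>)) + (\<Sum>j\<in>UNIV. \<beta>X$j * Xc j \<omega>))"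
      by (rule sqi_add[OF s0 sS2])
    have "c l = cov M Y (Zc l)" unfolding c_def by (rule cov_sym)
    also have "\<dots> = cov M (\<lambda>\<omega>. (\<alpha> + (\<Sum>m\<in>UNIV. \<beta>Z$m * Zc m \<omega>)) + (\<Sum>j\<in>UNIV. \<beta>X$j * Xc j \<omega>)) (Zc l) + cov M eps (Zc l)"
      by (subst Yeq) (rule cov_add_left[OF s00 seps sZ])
    also have "cov M (\<lambda>\<omega>. (\<alpha> + (\<Sum>m\<in>UNIV. \<beta>Z$m * Zc m \<omega>)) + (\<Sum>j\<in>UNIV. \<beta>X$j * Xc j \<omega>)) (Zc l)
       = cov M (\<lambda>\<omega>. \<alpha> + (\<Sum>m\<in>UNIV. \<beta>Z$m * Zc m \<omega>)) (Zc l) + cov M (\<lambda>\<omega>. \<Sum>j\<in>UNIV. \<beta>X$j * Xc j \<omega>) (Zc l)"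
      by (rule cov_add_left[OF s0 sS2 sZ])
    also have "cov M (\<lambda>\<omega>. \<alpha> + (\<Sum>m\<in>UNIV. \<beta>Z$m * Zc m \<omega>)) (Zc l) = cov M (\<lambda>\<omega>. \<Sum>m\<in>UNIV. \<beta>Z$m * Zc m \<omega>) (Zc l)"
      using cov_add_left[OF sqi_const sS1 sZ] by simp
    also have "cov M (\<lambda>\<omega>. \<Sum>m\<in>UNIV. \<beta>Z$m * Zc m \<omega>) (Zc l) = (\<Sum>m\<in>UNIV. A l m * \<beta>Z$m)"
      using sZ by (simp add: cov_sum_left sqi_cmult cov_cmult_left A_def cov_sym[of "Zc l"] mult.commute)
    also have "cov M (\<lambda>\<omega>. \<Sum>j\<in>UNIV. \<beta>X$j * Xc j \<omega>) (Zc l) = (\<Sum>j\<in>UNIV. Bm l j * \<beta>X$j)"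
      using sZ sX by (simp add: cov_sum_left sqi_cmult cov_cmult_left Bm_def cov_sym[of "Zc l"] mult.commute)
    finally show ?thesis using ceps by simp
  qed
  obtain b0 :: "real^'p" where b0': "\<And>k. (\<Sum>l\<in>UNIV. A k l * b0$l) = (\<chi> k. c k)$k"
    using pd_solve[of A "\<chi> k. c k"] pdA unfolding qf_def by blast
  have Ab0: "\<And>k. (\<Sum>l\<in>UNIV. A k l * b0$l) = c k" using b0' by simp
  define g where "g = b0 - \<beta>Z"
  have geq: "(\<Sum>m\<in>UNIV. cov M (Zc l) (Zc m) * g$m) = (\<Sum>j\<in>UNIV. cov M (Zc l) (Xc j) * \<beta>X$j)" for l
  proof -
    have "(\<Sum>m\<in>UNIV. A l m * g$m) = (\<Sum>m\<in>UNIV. A l m * b0$m) - (\<Sum>m\<in>UNIV. A l m * \<beta>Z$m)"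
      unfolding g_def sum_subtractf[symmetric] by (simp add: algebra_simps)
    then show ?thesis using Ab0[of l] cY[of l] unfolding A_def Bm_def by simp
  qed
  have sign: "\<forall>k\<in>P. g$k \<le> 0"
  proof
    fix k assume k: "k \<in> P"
    show "g$k \<le> 0"
    proof (rule pop_sign[OF sZ sX _ geq no_benefit_X])
      fix v :: "real^'p" assume "v \<noteq> 0"
      then show "(\<Sum>l\<in>UNIV. \<Sum>m\<in>UNIV. cov M (Zc l) (Zc m) * v$l * v$m) > 0"
        using pdA unfolding qf_def A_def by blast
    next
      fix j show "partial_corr M (Zc k) (Xc j) Zc (-{k}) > 0"
        using weak_partial_PC[OF k, of j] unfolding Zc_def Xc_def .
    qed
  qed
  obtain lm where lm: "lm > 0" "\<And>v. qf A v \<ge> lm * (norm v)^2"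
    using lam_exists[OF pdA] by blast
  have conv: "conv_in_prob M (\<lambda>N \<omega>. ols_slope N (\<lambda>i. Ys i \<omega>) (\<lambda>i. Zs i \<omega>) - \<beta>Z) g"
  proof (rule conv_from_ev)
    fix e :: real assume e: "e > 0"
    define n where "n = real CARD('p)"
    have n1: "n \<ge> 1" unfolding n_def by simp
    define Bd where "Bd = \<bar>integral\<^sup>L M Y\<bar> + (\<Sum>k\<in>UNIV. \<bar>integral\<^sup>L M (Zc k)\<bar>)"
    have BdY: "\<bar>integral\<^sup>L M Y\<bar> \<le> Bd" unfolding Bd_def by (simp add: sum_nonneg)
    have BdZ: "\<bar>integral\<^sup>L M (Zc k)\<bar> \<le> Bd" for k
    proof -
      have "\<bar>integral\<^sup>L M (Zc k)\<bar> \<le> (\<Sum>k\<in>UNIV. \<bar>integral\<^sup>L M (Zc k)\<bar>)"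
        by (rule member_le_sum) auto
      then show ?thesis unfolding Bd_def by simp
    qed
    have Bd0: "Bd \<ge> 0" using BdY by linarith
    define \<tau> where "\<tau> = min (e * lm / (4 * n * (n * norm b0 + 1))) (lm / (2 * n^2))"
    have "n * norm b0 \<ge> 0" using n1 by simp
    then have "n * norm b0 + 1 > 0" by linarith
    then have pos: "4 * n * (n * norm b0 + 1) > 0" using n1 by simp
    have t0: "\<tau> > 0" unfolding \<tau>_def using pos e lm(1) n1 by (auto intro!: divide_pos_pos mult_pos_pos)
    have t1: "\<tau> * n^2 \<le> lm / 2"
    proof -
      have "\<tau> \<le> lm / (2 * n^2)" unfolding \<tau>_def by simp
      then have "\<tau> * n^2 \<le> lm / (2 * n^2) * n^2" using n1 by (intro mult_right_mono) auto
      then show ?thesis using n1 by simp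
    qed
    have t2: "4 * n * (\<tau> * (n * norm b0 + 1)) / lm \<le> e"
    proof -
      have "\<tau> \<le> e * lm / (4 * n * (n * norm b0 + 1))" unfolding \<tau>_def by simp
      then have "\<tau> * (4 * n * (n * norm b0 + 1)) \<le> e * lm" using pos by (simp add: field_simps)
      then show ?thesis using lm(1) by (simp add: field_simps)
    qed
    define \<eta> where "\<eta> = min 1 (\<tau> / (2 + 2 * Bd))"
    have e0: "\<eta> > 0" unfolding \<eta>_def using t0 Bd0 by simp
    have e1: "\<eta> \<le> 1" unfolding \<eta>_def by simp
    have e2: "\<eta> * (2 * Bd + 2) \<le> \<tau>"
    proof -
      have "\<eta> \<le> \<tau> / (2 + 2 * Bd)" unfolding \<eta>_def by simp
      then show ?thesis using Bd0 by (simp add: field_simps)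
    qed
    have ev1: "ev_holds M (\<lambda>N \<omega>. \<forall>k\<in>(UNIV :: (1 + ('p + ('d + 'd))) set).
        dist ((\<Sum>i<N. stackV (Ys i \<omega>) (Zs i \<omega>) (Xs i \<omega>) (Ws i \<omega>) $ k) / real N) (integral\<^sup>L M (\<lambda>\<omega>. stackV (Y \<omega>) (Z \<omega>) (X \<omega>) (W \<omega>) $ k)) \<le> \<eta>)"
      by (intro ev_all ev_from_conv[OF first_moments_conv e0]) auto
    have ev2: "ev_holds M (\<lambda>N \<omega>. \<forall>p\<in>(UNIV :: ((1 + ('p + ('d + 'd))) \<times> (1 + ('p + ('d + 'd)))) set).
        dist ((\<Sum>i<N. stackV (Ys i \<omega>) (Zs i \<omega>) (Xs i \<omega>) (Ws i \<omega>) $ fst p * stackV (Ys i \<omega>) (Zs i \<omega>) (Xs i \<omega>) (Ws i \<omega>) $ snd p) / real N)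
             (integral\<^sup>L M (\<lambda>\<omega>. stackV (Y \<omega>) (Z \<omega>) (X \<omega>) (W \<omega>) $ fst p * stackV (Y \<omega>) (Z \<omega>) (X \<omega>) (W \<omega>) $ snd p)) \<le> \<eta>)"
      by (intro ev_all ev_from_conv[OF second_moments_conv e0]) auto
    have ev: "ev_holds M (\<lambda>N \<omega>. N \<ge> 1 \<and> ((\<forall>k\<in>(UNIV :: (1 + ('p + ('d + 'd))) set).
        dist ((\<Sum>i<N. stackV (Ys i \<omega>) (Zs i \<omega>) (Xs i \<omega>) (Ws i \<omega>) $ k) / real N) (integral\<^sup>L M (\<lambda>\<omega>. stackV (Y \<omega>) (Z \<omega>) (X \<omega>) (W \<omega>) $ k)) \<le> \<eta>) \<and>
        (\<forall>p\<in>(UNIV :: ((1 + ('p + ('d + 'd))) \<times> (1 + ('p + ('d + 'd)))) set).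
        dist ((\<Sum>i<N. stackV (Ys i \<omega>) (Zs i \<omega>) (Xs i \<omega>) (Ws i \<omega>) $ fst p * stackV (Ys i \<omega>) (Zs i \<omega>) (Xs i \<omega>) (Ws i \<omega>) $ snd p) / real N)
             (integral\<^sup>L M (\<lambda>\<omega>. stackV (Y \<omega>) (Z \<omega>) (X \<omega>) (W \<omega>) $ fst p * stackV (Y \<omega>) (Z \<omega>) (X \<omega>) (W \<omega>) $ snd p)) \<le> \<eta>)))"
      by (intro ev_conj ev_true ev1 ev2)
    show "ev_holds M (\<lambda>N \<omega>. dist (ols_slope N (\<lambda>i. Ys i \<omega>) (\<lambda>i. Zs i \<omega>) - \<beta>Z) g \<le> e)"
    proof (rule ev_mono[OF ev], elim conjE)
      fix N \<omega>
      assume N1: "N \<ge> 1"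
        and H1: "\<forall>k\<in>(UNIV :: (1 + ('p + ('d + 'd))) set).
          dist ((\<Sum>i<N. stackV (Ys i \<omega>) (Zs i \<omega>) (Xs i \<omega>) (Ws i \<omega>) $ k) / real N) (integral\<^sup>L M (\<lambda>\<omega>. stackV (Y \<omega>) (Z \<omega>) (X \<omega>) (W \<omega>) $ k)) \<le> \<eta>"
        and H2: "\<forall>p\<in>(UNIV :: ((1 + ('p + ('d + 'd))) \<times> (1 + ('p + ('d + 'd)))) set).
          dist ((\<Sum>i<N. stackV (Ys i \<omega>) (Zs i \<omega>) (Xs i \<omega>) (Ws i \<omega>) $ fst p * stackV (Ys i \<omega>) (Zs i \<omega>) (Xs i \<omega>) (Ws i \<omega>) $ snd p) / real N)
             (integral\<^sup>L M (\<lambda>\<omega>. stackV (Y \<omega>) (Z \<omega>) (X \<omega>) (W \<omega>) $ fst p * stackV (Y \<omega>) (Z \<omega>) (X \<omega>) (W \<omega>) $ snd p)) \<le> \<eta>"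
      define y where "y = (\<lambda>i. Ys i \<omega>)"
      define z where "z = (\<lambda>i. Zs i \<omega>)"
      have N0: "N > 0" using N1 by simp
      have fY: "\<bar>sbar N y - integral\<^sup>L M Y\<bar> \<le> \<eta>"
        using H1[rule_format, of "Inl 1"] unfolding sbar_def y_def by (simp add: dist_real_def)
      have fZ: "\<bar>sbar N (\<lambda>i. z i $ k) - integral\<^sup>L M (Zc k)\<bar> \<le> \<eta>" for k
        using H1[rule_format, of "Inr (Inl k)"] unfolding sbar_def z_def Zc_def by (simp add: dist_real_def)
      have sZZ: "\<bar>(\<Sum>i<N. z i $ k * z i $ l) / real N - integral\<^sup>L M (\<lambda>\<omega>. Zc k \<omega> * Zc l \<omega>)\<bar> \<le> \<eta>" for k l
        using H2[rule_format, of "(Inr (Inl k), Inr (Inl l))"] unfolding z_def Zc_def by (simp add: dist_real_def)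
      have sZY: "\<bar>(\<Sum>i<N. z i $ k * y i) / real N - integral\<^sup>L M (\<lambda>\<omega>. Zc k \<omega> * Y \<omega>)\<bar> \<le> \<eta>" for k
        using H2[rule_format, of "(Inr (Inl k), Inl 1)"] unfolding z_def y_def Zc_def by (simp add: dist_real_def)
      have errS: "\<bar>sSh N z k l - A k l\<bar> \<le> \<tau>" for k l
      proof -
        have "sSh N z k l = (\<Sum>i<N. z i $ k * z i $ l) / real N - sbar N (\<lambda>i. z i $ k) * sbar N (\<lambda>i. z i $ l)"
          unfolding sSh_def sbar_def by (rule cent[OF N0])
        moreover have "A k l = integral\<^sup>L M (\<lambda>\<omega>. Zc k \<omega> * Zc l \<omega>) - integral\<^sup>L M (Zc k) * integral\<^sup>L M (Zc l)"
          unfolding A_def cov_def ..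
        moreover have "\<bar>sbar N (\<lambda>i. z i $ k) * sbar N (\<lambda>i. z i $ l) - integral\<^sup>L M (Zc k) * integral\<^sup>L M (Zc l)\<bar> \<le> \<eta> * (2 * Bd + 1)"
          by (rule prod_err[OF fZ fZ e1 BdZ BdZ])
        ultimately have "\<bar>sSh N z k l - A k l\<bar> \<le> \<eta> + \<eta> * (2 * Bd + 1)" using sZZ[of k l] by linarith
        then show ?thesis using e2 by (simp add: algebra_simps)
      qed
      have errc: "\<bar>sch N y z k - c k\<bar> \<le> \<tau>" for k
      proof -
        have "sch N y z k = (\<Sum>i<N. z i $ k * y i) / real N - sbar N (\<lambda>i. z i $ k) * sbar N y"
          unfolding sch_def sbar_def by (rule cent[OF N0])
        moreover have "c k = integral\<^sup>L M (\<lambda>\<omega>. Zc k \<omega> * Y \<omega>) - integral\<^sup>L M (Zc k) * integral\<^sup>L M Y"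
          unfolding c_def cov_def ..
        moreover have "\<bar>sbar N (\<lambda>i. z i $ k) * sbar N y - integral\<^sup>L M (Zc k) * integral\<^sup>L M Y\<bar> \<le> \<eta> * (2 * Bd + 1)"
          by (rule prod_err[OF fZ fY e1 BdZ BdY])
        ultimately have "\<bar>sch N y z k - c k\<bar> \<le> \<eta> + \<eta> * (2 * Bd + 1)" using sZY[of k] by linarith
        then show ?thesis using e2 by (simp add: algebra_simps)
      qed
      have "norm (ols_slope N y z - b0) \<le> 4 * real CARD('p) * (\<tau> * (real CARD('p) * norm b0 + 1)) / lm"
        by (rule ols_bound[OF N0 lm Ab0 errS errc]) (use t1 in \<open>simp add: n_def\<close>)
      then have "norm (ols_slope N y z - b0) \<le> e" using t2 unfolding n_def by linarith
      then show "dist (ols_slope N (\<lambda>i. Ys i \<omega>) (\<lambda>i. Zs i \<omega>) - \<beta>Z) g \<le> e"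
        unfolding y_def z_def g_def dist_norm by (simp add: algebra_simps)
    qed
  qed
  show ?thesis using conv sign by blast
qed


end
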